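(* Fix integers $d\geq1$ and, for $1\leq i\leq d$, $k_i\geq1$, a connected graph $F_i$ on $[k_i]$, and bounded measurable $\phi_i:\mathcal{D}_{k_i}\to\mathbb{R}$, $\psi_i:[0,1]^{k_i}\to\mathbb{R}$; fix a graphon $\kappa$ and a constant $B$. For each $n\geq1$ let $U=(U_1,\dots,U_n)$ be independent $[0,1]$-valued random variables and $(Y_{vw})_{1\leq v<w\leq n}$ random variables, conditionally independent given $U$, with $\mathbb{E}[Y_{vw}\mid U]=\kappa(U_v,U_w)$ and $|Y_{vw}|\leq B$ (laws may depend on $n$), and define $X_{i,a}$ and $N^{i,a}_j$ as in the context. Let $1\leq i,j\leq d$ and $m\geq2$. Then there exists a constant $C>0$ independent of $n$ such that for all $n$ $$\Bigg|\mathbb{E}\sum_{a\in\mathcal{I}^n_{k_i}}\sum_{b_1\in N^{i,a}_{j}}\cdots\sum_{b_m\in N^{i,a}_{j}}X_{j,b_1}\cdots X_{j,b_m}\Bigg|\leq\begin{cases}Cn^{1-m/2}&\text{if }k_i=1,\\ Cn^{k_i-m}&\text{if }k_i\geq2.\end{cases}$$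
   Context: A graphon is a symmetric measurable $\kappa:[0,1]^2\to[0,1]$. $\mathcal{I}^n_k=\{(a_1,\dots,a_k)\in\mathbb{N}^k:1\leq a_1<\cdots<a_k\leq n\}$, $\mathcal{D}_k=\{x\in[0,1]^k:x_1\leq\cdots\leq x_k\}$, $a/n=(a_1/n,\dots,a_k/n)$, $U_a=(U_{a_1},\dots,U_{a_k})$. For $a\in\mathcal{I}^n_{k_i}$: $T_{i,a}=\prod_{\{v,w\}\in E(F_i),v<w}(Y_{a_va_w}-\kappa(U_{a_v},U_{a_w}))$ if $k_i\geq2$, $T_{i,a}=1$ if $k_i=1$; $\Phi_{i,a}=\psi_i(U_{a_1})-\mathbb{E}\psi_i(U_{a_1})$ if $k_i=1$, $\Phi_{i,a}=\psi_i(U_a)$ if $k_i\geq2$; $X_{i,a}=\binom{n}{k_i}^{-1/2}\phi_i(a/n)\Phi_{i,a}T_{i,a}$. For $1\leq j\leq d$, $N^{i,a}_j=\{b\in\mathcal{I}^n_{k_j}:|\{a_1,\dots,a_{k_i}\}\cap\{b_1,\dots,b_{k_j}\}|\geq\min(2,k_i)\}$. *)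

theory Defs
  imports "HOL-Probability.Probability"
begin

definition incr_tuples :: "nat \<Rightarrow> nat \<Rightarrow> nat list set" where
  "incr_tuples n k = {a. length a = k \<and> sorted_wrt (<) a \<and> set a \<subseteq> {1..n}}"

text \<open>D_k, points of [0,1]^k are functions on positions {..<k} (extensional).\<close>
definition simplex_D :: "nat \<Rightarrow> (nat \<Rightarrow> real) set" where
  "simplex_D k = {x \<in> extensional {..<k}. \<forall>v w. v \<le> w \<longrightarrow> w < k \<longrightarrow> x v \<le> x w}"

definition unit_cube :: "nat \<Rightarrow> (nat \<Rightarrow> real) set" where
  "unit_cube k = {x \<in> extensional {..<k}. \<forall>v<k. x v \<in> {0..1}}"

text \<open>A (simple) connected graph on the vertex positions {0..<k} (standing for [k]),
  given by its edge set of pairs (v,w) with v < w.\<close>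
definition connected_graph :: "nat \<Rightarrow> (nat \<times> nat) set \<Rightarrow> bool" where
  "connected_graph k E \<longleftrightarrow> E \<subseteq> {(v,w). v < w \<and> w < k} \<and>
     (\<forall>v<k. \<forall>w<k. (v, w) \<in> (E \<union> E\<inverse>)\<^sup>*)"

definition graphon :: "(real \<Rightarrow> real \<Rightarrow> real) \<Rightarrow> bool" where
  "graphon \<kappa> \<longleftrightarrow> case_prod \<kappa> \<in> borel_measurable (restrict_space (borel \<Otimes>\<^sub>M borel) ({0..1} \<times> {0..1}))
     \<and> (\<forall>x\<in>{0..1}. \<forall>y\<in>{0..1}. \<kappa> x y = \<kappa> y x \<and> \<kappa> x y \<in> {0..1})"

definition gen_sigma :: "'a measure \<Rightarrow> ('i \<Rightarrow> 'a \<Rightarrow> real) \<Rightarrow> 'i set \<Rightarrow> 'a measure" where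
  "gen_sigma M X I = sigma (space M) (\<Union>i\<in>I. {X i -` A \<inter> space M | A. A \<in> sets borel})"

definition cond_indep_vars :: "'a measure \<Rightarrow> 'a measure \<Rightarrow> ('i \<Rightarrow> 'a \<Rightarrow> real) \<Rightarrow> 'i set \<Rightarrow> bool" where
  "cond_indep_vars M G X I \<longleftrightarrow>
     (\<forall>J A. J \<subseteq> I \<longrightarrow> finite J \<longrightarrow> (\<forall>j\<in>J. A j \<in> sets borel) \<longrightarrow>
        (AE \<omega> in M. real_cond_exp M G (\<lambda>\<omega>. \<Prod>j\<in>J. indicator (A j) (X j \<omega>)) \<omega>
                   = (\<Prod>j\<in>J. real_cond_exp M G (\<lambda>\<omega>. indicator (A j) (X j \<omega>)) \<omega>)))"

definition Uvec :: "(nat \<Rightarrow> 'a \<Rightarrow> real) \<Rightarrow> nat list \<Rightarrow> 'a \<Rightarrow> nat \<Rightarrow> real" where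
  "Uvec U a \<omega> = (\<lambda>v\<in>{..<length a}. U (a ! v) \<omega>)"

definition scaled :: "nat \<Rightarrow> nat list \<Rightarrow> nat \<Rightarrow> real" where
  "scaled n a = (\<lambda>v\<in>{..<length a}. real (a ! v) / real n)"

definition T_term :: "nat \<Rightarrow> (nat \<times> nat) set \<Rightarrow> (nat \<Rightarrow> nat \<Rightarrow> 'a \<Rightarrow> real) \<Rightarrow>
    (real \<Rightarrow> real \<Rightarrow> real) \<Rightarrow> (nat \<Rightarrow> 'a \<Rightarrow> real) \<Rightarrow> nat list \<Rightarrow> 'a \<Rightarrow> real" where
  "T_term k E Y \<kappa> U a \<omega> = (if k = 1 then 1 else
     (\<Prod>(v,w)\<in>E. Y (a ! v) (a ! w) \<omega> - \<kappa> (U (a ! v) \<omega>) (U (a ! w) \<omega>)))"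

definition Phi_term :: "'a measure \<Rightarrow> nat \<Rightarrow> ((nat \<Rightarrow> real) \<Rightarrow> real) \<Rightarrow> (nat \<Rightarrow> 'a \<Rightarrow> real) \<Rightarrow> nat list \<Rightarrow> 'a \<Rightarrow> real" where
  "Phi_term M k \<psi> U a \<omega> = (if k = 1
     then \<psi> (Uvec U a \<omega>) - integral\<^sup>L M (\<lambda>\<omega>'. \<psi> (Uvec U a \<omega>'))
     else \<psi> (Uvec U a \<omega>))"

definition X_term :: "'a measure \<Rightarrow> nat \<Rightarrow> nat \<Rightarrow> (nat \<times> nat) set \<Rightarrow> ((nat \<Rightarrow> real) \<Rightarrow> real) \<Rightarrow>
    ((nat \<Rightarrow> real) \<Rightarrow> real) \<Rightarrow> (real \<Rightarrow> real \<Rightarrow> real) \<Rightarrow> (nat \<Rightarrow> 'a \<Rightarrow> real) \<Rightarrow>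
    (nat \<Rightarrow> nat \<Rightarrow> 'a \<Rightarrow> real) \<Rightarrow> nat list \<Rightarrow> 'a \<Rightarrow> real" where
  "X_term M n k E \<phi> \<psi> \<kappa> U Y a \<omega> =
     (real (n choose k)) powr (-1/2) * \<phi> (scaled n a) * Phi_term M k \<psi> U a \<omega> * T_term k E Y \<kappa> U a \<omega>"

definition nbhd :: "nat \<Rightarrow> nat \<Rightarrow> nat \<Rightarrow> nat list \<Rightarrow> nat list set" where
  "nbhd n ki kj a = {b \<in> incr_tuples n kj. card (set a \<inter> set b) \<ge> min 2 ki}"

end

theory Submission
  imports Defs
begin


locale ci_setup = prob_space M for M :: "'a measure" +
  fixes G :: "'a measure" and Y :: "'i \<Rightarrow> 'a \<Rightarrow> real" and I :: "'i set" and B :: real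
  assumes subalg: "subalgebra M G"
  and Ymeas: "\<And>i. i \<in> I \<Longrightarrow> Y i \<in> borel_measurable M"
  and Ybdd: "\<And>i \<omega>. i \<in> I \<Longrightarrow> \<omega> \<in> space M \<Longrightarrow> \<bar>Y i \<omega>\<bar> \<le> B"
  and cind: "cond_indep_vars M G Y I"

sublocale ci_setup \<subseteq> fms: finite_measure_subalgebra M G
  by unfold_locales (rule subalg)

lemma abs_mult_le: "\<bar>a::real\<bar> \<le> K1 \<Longrightarrow> \<bar>b\<bar> \<le> K2 \<Longrightarrow> \<bar>a * b\<bar> \<le> K1 * K2"
  by (simp add: abs_mult mult_mono')

lemma abs_mult_le1: "\<bar>a::real\<bar> \<le> K1 \<Longrightarrow> \<bar>b\<bar> \<le> 1 \<Longrightarrow> \<bar>a * b\<bar> \<le> K1"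
  using abs_mult_le[of a K1 b 1] by simp

context ci_setup
begin

lemma Gmeas_M: "f \<in> borel_measurable G \<Longrightarrow> f \<in> borel_measurable M"
  using measurable_from_subalg[OF subalg] by blast

lemma int_bdd_mult:
  fixes f g :: "'a \<Rightarrow> real"
  assumes "integrable M f" "g \<in> borel_measurable M" "\<And>\<omega>. \<omega> \<in> space M \<Longrightarrow> \<bar>g \<omega>\<bar> \<le> K"
  shows "integrable M (\<lambda>\<omega>. f \<omega> * g \<omega>)"
proof (rule Bochner_Integration.integrable_bound[where f="\<lambda>\<omega>. K * f \<omega>"])
  show "integrable M (\<lambda>\<omega>. K * f \<omega>)" using assms(1) by simp
  show "(\<lambda>\<omega>. f \<omega> * g \<omega>) \<in> borel_measurable M"
    using assms(1,2) by (intro borel_measurable_times) auto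
  show "AE x in M. norm (f x * g x) \<le> norm (K * f x)"
  proof (rule AE_I2)
    fix x assume x: "x \<in> space M"
    have "\<bar>g x\<bar> \<le> \<bar>K\<bar>" using assms(3)[OF x] by linarith
    then show "norm (f x * g x) \<le> norm (K * f x)"
      by (simp add: abs_mult) (metis abs_ge_zero mult.commute mult_right_mono)
  qed
qed

lemma int_bdd:
  fixes g :: "'a \<Rightarrow> real"
  assumes "g \<in> borel_measurable M" "\<And>\<omega>. \<omega> \<in> space M \<Longrightarrow> \<bar>g \<omega>\<bar> \<le> K"
  shows "integrable M g"
  using assms by (intro integrable_const_bound[where B=K]) auto

lemma ind_meas:
  assumes "i \<in> I" "A \<in> sets borel"
  shows "(\<lambda>\<omega>. indicator A (Y i \<omega>) :: real) \<in> borel_measurable M"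
  using Ymeas[OF assms(1)] assms(2) by measurable

lemma prod_ind_meas:
  assumes "J \<subseteq> I" "\<forall>j\<in>J. A j \<in> sets borel"
  shows "(\<lambda>\<omega>. \<Prod>j\<in>J. indicator (A j) (Y j \<omega>) :: real) \<in> borel_measurable M"
  using assms by (intro borel_measurable_prod ind_meas) auto

lemma prod_ind_bdd: "\<bar>\<Prod>j\<in>J. indicator (A j) (y j) :: real\<bar> \<le> 1"
  by (induction J rule: infinite_finite_induct) (auto simp: abs_mult indicator_def)

lemma cind_prod:
  assumes "J \<subseteq> I" "finite J" "\<And>j. j \<in> J \<Longrightarrow> A j \<in> sets borel"
  shows "AE \<omega> in M. real_cond_exp M G (\<lambda>\<omega>. \<Prod>j\<in>J. indicator (A j) (Y j \<omega>)) \<omega>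
                   = (\<Prod>j\<in>J. real_cond_exp M G (\<lambda>\<omega>. indicator (A j) (Y j \<omega>)) \<omega>)"
  using cind assms unfolding cond_indep_vars_def by blast

lemma cind_prod_mult:
  fixes f :: "'a \<Rightarrow> real"
  assumes "J \<subseteq> I" "finite J" "\<forall>j\<in>J. A j \<in> sets borel"
  shows "AE \<omega> in M. f \<omega> * real_cond_exp M G (\<lambda>\<omega>. \<Prod>j\<in>J. indicator (A j) (Y j \<omega>)) \<omega>
                   = f \<omega> * (\<Prod>j\<in>J. real_cond_exp M G (\<lambda>\<omega>. indicator (A j) (Y j \<omega>)) \<omega>)"
proof -
  have "AE \<omega> in M. real_cond_exp M G (\<lambda>\<omega>. \<Prod>j\<in>J. indicator (A j) (Y j \<omega>)) \<omega>
                   = (\<Prod>j\<in>J. real_cond_exp M G (\<lambda>\<omega>. indicator (A j) (Y j \<omega>)) \<omega>)"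
    by (rule cind_prod) (use assms in auto)
  then show ?thesis by eventually_elim simp
qed

lemma ind_step:
  fixes c :: "'a \<Rightarrow> real"
  assumes J: "J \<subseteq> I" "finite J" "e \<in> I" "e \<notin> J"
    and A: "A \<in> sets borel" "\<And>j. j \<in> J \<Longrightarrow> Aj j \<in> sets borel"
    and c: "c \<in> borel_measurable G" "\<And>\<omega>. \<omega> \<in> space M \<Longrightarrow> \<bar>c \<omega>\<bar> \<le> K"
  shows "(\<integral>\<omega>. c \<omega> * indicator A (Y e \<omega>) * (\<Prod>j\<in>J. indicator (Aj j) (Y j \<omega>)) \<partial>M)
       = (\<integral>\<omega>. c \<omega> * real_cond_exp M G (\<lambda>\<omega>. indicator A (Y e \<omega>)) \<omega> * (\<Prod>j\<in>J. indicator (Aj j) (Y j \<omega>)) \<partial>M)"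
proof -
  define A' where "A' = Aj(e := A)"
  have A': "\<And>j. j \<in> insert e J \<Longrightarrow> A' j \<in> sets borel" using A by (auto simp: A'_def)
  have A'b: "\<forall>j\<in>insert e J. A' j \<in> sets borel" using A' by blast
  have Ab: "\<forall>j\<in>J. Aj j \<in> sets borel" using A(2) by blast
  have JJ: "insert e J \<subseteq> I" "finite (insert e J)" using J by auto
  have cM: "c \<in> borel_measurable M" using Gmeas_M c(1) .
  let ?ce = "real_cond_exp M G"
  have eqJ: "\<And>\<omega>. (\<Prod>j\<in>J. indicator (A' j) (Y j \<omega>) :: real) = (\<Prod>j\<in>J. indicator (Aj j) (Y j \<omega>))"
    using J(4) by (intro prod.cong) (auto simp: A'_def)
  have eqJc: "\<And>\<omega>. (\<Prod>j\<in>J. ?ce (\<lambda>\<omega>. indicator (A' j) (Y j \<omega>)) \<omega>) = (\<Prod>j\<in>J. ?ce (\<lambda>\<omega>. indicator (Aj j) (Y j \<omega>)) \<omega>)"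
    using J(4) by (intro prod.cong) (auto simp: A'_def)
  have pe: "\<And>\<omega>. (\<Prod>j\<in>insert e J. indicator (A' j) (Y j \<omega>) :: real) = indicator A (Y e \<omega>) * (\<Prod>j\<in>J. indicator (Aj j) (Y j \<omega>))"
    by (simp only: prod.insert[OF J(2) J(4)] eqJ) (simp add: A'_def)
  have pec: "\<And>\<omega>. (\<Prod>j\<in>insert e J. ?ce (\<lambda>\<omega>. indicator (A' j) (Y j \<omega>)) \<omega>) = ?ce (\<lambda>\<omega>. indicator A (Y e \<omega>)) \<omega> * (\<Prod>j\<in>J. ?ce (\<lambda>\<omega>. indicator (Aj j) (Y j \<omega>)) \<omega>)"
    by (simp only: prod.insert[OF J(2) J(4)] eqJc) (simp add: A'_def)
  have "(\<integral>\<omega>. c \<omega> * indicator A (Y e \<omega>) * (\<Prod>j\<in>J. indicator (Aj j) (Y j \<omega>)) \<partial>M)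
      = (\<integral>\<omega>. c \<omega> * (\<Prod>j\<in>insert e J. indicator (A' j) (Y j \<omega>)) \<partial>M)"
    apply (subst pe) apply (simp only: mult.assoc) done
  also have "\<dots> = (\<integral>\<omega>. c \<omega> * ?ce (\<lambda>\<omega>. \<Prod>j\<in>insert e J. indicator (A' j) (Y j \<omega>)) \<omega> \<partial>M)"
  proof (rule fms.real_cond_exp_intg(2)[symmetric])
    show "integrable M (\<lambda>x. c x * (\<Prod>j\<in>insert e J. indicator (A' j) (Y j x)))"
      by (rule int_bdd[where K=K, OF _ abs_mult_le1[OF c(2) prod_ind_bdd]]) (use cM prod_ind_meas[OF JJ(1) A'b] in simp_all)
  qed (use c(1) prod_ind_meas[OF JJ(1) A'b] in simp_all)
  also have "\<dots> = (\<integral>\<omega>. c \<omega> * (\<Prod>j\<in>insert e J. ?ce (\<lambda>\<omega>. indicator (A' j) (Y j \<omega>)) \<omega>) \<partial>M)"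
  proof (rule integral_cong_AE)
    show "AE \<omega> in M. c \<omega> * ?ce (\<lambda>\<omega>. \<Prod>j\<in>insert e J. indicator (A' j) (Y j \<omega>)) \<omega> = c \<omega> * (\<Prod>j\<in>insert e J. ?ce (\<lambda>\<omega>. indicator (A' j) (Y j \<omega>)) \<omega>)"
      using cind_prod_mult[OF JJ(1) JJ(2) A'b, where f=c] by eventually_elim simp
  qed (use cM in \<open>auto intro!: borel_measurable_prod\<close>)
  also have "\<dots> = (\<integral>\<omega>. (c \<omega> * ?ce (\<lambda>\<omega>. indicator A (Y e \<omega>)) \<omega>) * (\<Prod>j\<in>J. ?ce (\<lambda>\<omega>. indicator (Aj j) (Y j \<omega>)) \<omega>) \<partial>M)"
    apply (subst pec) apply (simp only: mult.assoc) done
  also have "\<dots> = (\<integral>\<omega>. (c \<omega> * ?ce (\<lambda>\<omega>. indicator A (Y e \<omega>)) \<omega>) * ?ce (\<lambda>\<omega>. \<Prod>j\<in>J. indicator (Aj j) (Y j \<omega>)) \<omega> \<partial>M)"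
  proof (rule integral_cong_AE)
    show "AE \<omega> in M. (c \<omega> * ?ce (\<lambda>\<omega>. indicator A (Y e \<omega>)) \<omega>) * (\<Prod>j\<in>J. ?ce (\<lambda>\<omega>. indicator (Aj j) (Y j \<omega>)) \<omega>) = (c \<omega> * ?ce (\<lambda>\<omega>. indicator A (Y e \<omega>)) \<omega>) * ?ce (\<lambda>\<omega>. \<Prod>j\<in>J. indicator (Aj j) (Y j \<omega>)) \<omega>"
      using cind_prod_mult[OF J(1) J(2) Ab, where f="\<lambda>\<omega>. c \<omega> * ?ce (\<lambda>\<omega>. indicator A (Y e \<omega>)) \<omega>"] by eventually_elim (rule sym, assumption)
  qed (use cM in \<open>auto intro!: borel_measurable_prod\<close>)
  also have "\<dots> = (\<integral>\<omega>. (c \<omega> * ?ce (\<lambda>\<omega>. indicator A (Y e \<omega>)) \<omega>) * (\<Prod>j\<in>J. indicator (Aj j) (Y j \<omega>)) \<partial>M)"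
  proof (rule fms.real_cond_exp_intg(2))
    have "integrable M (\<lambda>\<omega>. ?ce (\<lambda>\<omega>. indicator A (Y e \<omega>)) \<omega> * c \<omega>)"
      by (rule int_bdd_mult[where K=K, OF fms.real_cond_exp_int(1)[OF int_bdd[where K=1, OF ind_meas[OF J(3) A(1)]]] cM c(2)])
        (simp_all add: indicator_def)
    then have "integrable M (\<lambda>\<omega>. c \<omega> * ?ce (\<lambda>\<omega>. indicator A (Y e \<omega>)) \<omega>)"
      by (simp add: mult.commute)
    then show "integrable M (\<lambda>x. (c x * ?ce (\<lambda>\<omega>. indicator A (Y e \<omega>)) x) * (\<Prod>j\<in>J. indicator (Aj j) (Y j x)))"
      by (rule int_bdd_mult[where K=1, OF _ prod_ind_meas[OF J(1) Ab] prod_ind_bdd])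
  qed (use c(1) prod_ind_meas[OF J(1) Ab] in simp_all)
  finally show ?thesis by (simp add: mult.assoc)
qed

end


definition Zs :: "real \<Rightarrow> nat \<Rightarrow> int set" where
  "Zs B N = {-(\<lceil>real (Suc N) * \<bar>B\<bar>\<rceil> + 1) .. \<lceil>real (Suc N) * \<bar>B\<bar>\<rceil> + 1}"
definition Ds :: "nat \<Rightarrow> int \<Rightarrow> real set" where
  "Ds N z = {y. \<lfloor>real (Suc N) * y\<rfloor> = z}"
definition sN :: "real \<Rightarrow> nat \<Rightarrow> nat \<Rightarrow> real \<Rightarrow> real" where
  "sN B N p y = (\<Sum>z\<in>Zs B N. (real_of_int z / real (Suc N)) ^ p * indicator (Ds N z) y)"

lemma Zs_finite: "finite (Zs B N)" by (simp add: Zs_def)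

lemma Ds_borel: "Ds N z \<in> sets borel"
proof -
  have n: "real (Suc N) > 0" by simp
  have "Ds N z = {real_of_int z / real (Suc N) ..< (real_of_int z + 1) / real (Suc N)}"
  proof (rule set_eqI)
    fix y
    have "y \<in> Ds N z \<longleftrightarrow> real_of_int z \<le> real (Suc N) * y \<and> real (Suc N) * y < real_of_int z + 1"
      unfolding Ds_def by (simp add: floor_eq_iff)
    also have "\<dots> \<longleftrightarrow> real_of_int z / real (Suc N) \<le> y \<and> y < (real_of_int z + 1) / real (Suc N)"
      using n by (simp add: divide_le_eq less_divide_eq mult.commute)
    finally show "y \<in> Ds N z \<longleftrightarrow> y \<in> {real_of_int z / real (Suc N) ..< (real_of_int z + 1) / real (Suc N)}"
      by simp
  qed
  then show ?thesis by simp
qed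

lemma floor_in_Zs:
  assumes "\<bar>y\<bar> \<le> B"
  shows "\<lfloor>real (Suc N) * y\<rfloor> \<in> Zs B N"
proof -
  define x where "x = real (Suc N) * y"
  define c where "c = real (Suc N) * \<bar>B\<bar>"
  have a: "\<bar>x\<bar> \<le> c"
    using assms unfolding x_def c_def by (simp add: abs_mult mult_left_mono)
  have b: "c \<le> real_of_int \<lceil>c\<rceil>" by (rule le_of_int_ceiling)
  have f1: "real_of_int \<lfloor>x\<rfloor> \<le> x" "x < real_of_int \<lfloor>x\<rfloor> + 1" by linarith+
  have "real_of_int \<lfloor>x\<rfloor> \<le> real_of_int \<lceil>c\<rceil> + 1" using a b f1 by linarith
  then have u: "\<lfloor>x\<rfloor> \<le> \<lceil>c\<rceil> + 1" by linarith
  have "- real_of_int \<lceil>c\<rceil> - 1 \<le> real_of_int \<lfloor>x\<rfloor>" using a b f1 by linarith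
  then have l: "-(\<lceil>c\<rceil> + 1) \<le> \<lfloor>x\<rfloor>" by linarith
  show ?thesis using u l unfolding Zs_def x_def c_def by simp
qed

lemma sN_eq:
  assumes "\<bar>y\<bar> \<le> B"
  shows "sN B N p y = (real_of_int \<lfloor>real (Suc N) * y\<rfloor> / real (Suc N)) ^ p"
proof -
  have "sN B N p y = (\<Sum>z\<in>Zs B N. if \<lfloor>real (Suc N) * y\<rfloor> = z then (real_of_int z / real (Suc N)) ^ p else 0)"
    unfolding sN_def by (intro sum.cong) (auto simp: Ds_def indicator_def)
  also have "\<dots> = (real_of_int \<lfloor>real (Suc N) * y\<rfloor> / real (Suc N)) ^ p"
    using floor_in_Zs[OF assms] Zs_finite by (simp add: sum.delta)
  finally show ?thesis .
qed

lemma sN_meas: "sN B N p \<in> borel_measurable borel"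
  unfolding sN_def using Ds_borel by measurable

lemma floor_approx:
  "\<bar>real_of_int \<lfloor>real (Suc N) * y\<rfloor> / real (Suc N) - y\<bar> \<le> 1 / real (Suc N)"
proof -
  have n: "real (Suc N) > 0" by simp
  have "real_of_int \<lfloor>real (Suc N) * y\<rfloor> \<le> real (Suc N) * y"
       "real (Suc N) * y < real_of_int \<lfloor>real (Suc N) * y\<rfloor> + 1" by linarith+
  then have h: "\<bar>real_of_int \<lfloor>real (Suc N) * y\<rfloor> - real (Suc N) * y\<bar> \<le> 1" by linarith
  have "real_of_int \<lfloor>real (Suc N) * y\<rfloor> / real (Suc N) - y = (real_of_int \<lfloor>real (Suc N) * y\<rfloor> - real (Suc N) * y) / real (Suc N)"
    using n by (simp add: field_simps)
  then have "\<bar>real_of_int \<lfloor>real (Suc N) * y\<rfloor> / real (Suc N) - y\<bar> = \<bar>real_of_int \<lfloor>real (Suc N) * y\<rfloor> - real (Suc N) * y\<bar> / real (Suc N)"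
    using n by simp
  also have "\<dots> \<le> 1 / real (Suc N)" using h n by (intro divide_right_mono) auto
  finally show ?thesis .
qed

lemma floor_lim: "(\<lambda>N. real_of_int \<lfloor>real (Suc N) * y\<rfloor> / real (Suc N)) \<longlonglongrightarrow> y"
proof -
  have "(\<lambda>N. 1 / real (Suc N)) \<longlonglongrightarrow> 0"
    using LIMSEQ_Suc[OF lim_const_over_n[of 1]] by simp
  then have "(\<lambda>N. real_of_int \<lfloor>real (Suc N) * y\<rfloor> / real (Suc N) - y) \<longlonglongrightarrow> 0"
    by (rule Lim_null_comparison[rotated]) (use floor_approx in auto)
  then show ?thesis by (simp add: LIM_zero_iff)
qed

lemma sN_lim:
  assumes "\<bar>y\<bar> \<le> B"
  shows "(\<lambda>N. sN B N p y) \<longlonglongrightarrow> y ^ p"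
  unfolding sN_eq[OF assms] by (intro tendsto_intros floor_lim)

lemma sN_bdd:
  assumes "\<bar>y\<bar> \<le> B"
  shows "\<bar>sN B N p y\<bar> \<le> (\<bar>B\<bar> + 1) ^ p"
proof -
  have "\<bar>real_of_int \<lfloor>real (Suc N) * y\<rfloor> / real (Suc N)\<bar> \<le> \<bar>y\<bar> + 1 / real (Suc N)"
    using floor_approx[of N y] by linarith
  also have "\<dots> \<le> \<bar>B\<bar> + 1"
  proof -
    have "1 / real (Suc N) \<le> 1" by simp
    then show ?thesis using assms by linarith
  qed
  finally have "\<bar>real_of_int \<lfloor>real (Suc N) * y\<rfloor> / real (Suc N)\<bar> ^ p \<le> (\<bar>B\<bar> + 1) ^ p"
    by (intro power_mono) simp_all
  then show ?thesis unfolding sN_eq[OF assms] by (simp add: power_abs)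
qed


context ci_setup
begin

lemma int_sum_expand:
  fixes g :: "'a \<Rightarrow> real"
  assumes g: "integrable M g" and S: "finite S"
    and P: "\<And>s. s \<in> S \<Longrightarrow> P s \<in> borel_measurable M"
    "\<And>s \<omega>. s \<in> S \<Longrightarrow> \<omega> \<in> space M \<Longrightarrow> \<bar>P s \<omega>\<bar> \<le> 1"
  shows "(\<integral>\<omega>. g \<omega> * (\<Sum>s\<in>S. a s * P s \<omega>) \<partial>M) = (\<Sum>s\<in>S. a s * (\<integral>\<omega>. g \<omega> * P s \<omega> \<partial>M))"
proof -
  have i: "\<And>s. s \<in> S \<Longrightarrow> integrable M (\<lambda>\<omega>. g \<omega> * P s \<omega>)"
    using int_bdd_mult[OF g P(1) P(2)] by blast
  have "(\<integral>\<omega>. g \<omega> * (\<Sum>s\<in>S. a s * P s \<omega>) \<partial>M) = (\<integral>\<omega>. (\<Sum>s\<in>S. a s * (g \<omega> * P s \<omega>)) \<partial>M)"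
    by (simp add: sum_distrib_left mult.left_commute)
  also have "\<dots> = (\<Sum>s\<in>S. (\<integral>\<omega>. a s * (g \<omega> * P s \<omega>) \<partial>M))"
    by (rule Bochner_Integration.integral_sum[where f="\<lambda>s \<omega>. a s * (g \<omega> * P s \<omega>)"]) (use i in auto)
  also have "\<dots> = (\<Sum>s\<in>S. a s * (\<integral>\<omega>. g \<omega> * P s \<omega> \<partial>M))"
    by simp
  finally show ?thesis .
qed

lemma approx_prod:
  fixes g :: "'a \<Rightarrow> real"
  assumes g: "integrable M g" and J: "J \<subseteq> I" "finite J"
  shows "(\<lambda>N. \<integral>\<omega>. g \<omega> * (\<Prod>j\<in>J. sN B N (p j) (Y j \<omega>)) \<partial>M) \<longlonglongrightarrow> (\<integral>\<omega>. g \<omega> * (\<Prod>j\<in>J. Y j \<omega> ^ p j) \<partial>M)"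
proof (rule integral_dominated_convergence[where w="\<lambda>\<omega>. \<bar>g \<omega>\<bar> * (\<Prod>j\<in>J. (\<bar>B\<bar> + 1) ^ p j)"])
  have gm: "g \<in> borel_measurable M" using g by auto
  have Ym: "\<And>j. j \<in> J \<Longrightarrow> Y j \<in> borel_measurable M" using Ymeas J(1) by auto
  show "(\<lambda>\<omega>. g \<omega> * (\<Prod>j\<in>J. Y j \<omega> ^ p j)) \<in> borel_measurable M"
    using gm Ym by (intro borel_measurable_times borel_measurable_prod borel_measurable_power) auto
  show "\<And>N. (\<lambda>\<omega>. g \<omega> * (\<Prod>j\<in>J. sN B N (p j) (Y j \<omega>))) \<in> borel_measurable M"
    using gm Ym by (intro borel_measurable_times borel_measurable_prod measurable_compose[OF _ sN_meas]) auto
  show "integrable M (\<lambda>\<omega>. \<bar>g \<omega>\<bar> * (\<Prod>j\<in>J. (\<bar>B\<bar> + 1) ^ p j))"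
    using g by (intro integrable_mult_left integrable_abs)
  show "AE \<omega> in M. (\<lambda>N. g \<omega> * (\<Prod>j\<in>J. sN B N (p j) (Y j \<omega>))) \<longlonglongrightarrow> g \<omega> * (\<Prod>j\<in>J. Y j \<omega> ^ p j)"
  proof (rule AE_I2)
    fix \<omega> assume \<omega>: "\<omega> \<in> space M"
    show "(\<lambda>N. g \<omega> * (\<Prod>j\<in>J. sN B N (p j) (Y j \<omega>))) \<longlonglongrightarrow> g \<omega> * (\<Prod>j\<in>J. Y j \<omega> ^ p j)"
      using J(1) Ybdd[OF _ \<omega>] by (intro tendsto_mult tendsto_const tendsto_prod sN_lim) auto
  qed
  show "\<And>N. AE \<omega> in M. norm (g \<omega> * (\<Prod>j\<in>J. sN B N (p j) (Y j \<omega>))) \<le> \<bar>g \<omega>\<bar> * (\<Prod>j\<in>J. (\<bar>B\<bar> + 1) ^ p j)"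
  proof (rule AE_I2)
    fix N \<omega> assume \<omega>: "\<omega> \<in> space M"
    have "\<bar>\<Prod>j\<in>J. sN B N (p j) (Y j \<omega>)\<bar> = (\<Prod>j\<in>J. \<bar>sN B N (p j) (Y j \<omega>)\<bar>)" by (rule abs_prod)
    also have "\<dots> \<le> (\<Prod>j\<in>J. (\<bar>B\<bar> + 1) ^ p j)"
      using J(1) Ybdd[OF _ \<omega>] by (intro prod_mono conjI abs_ge_zero sN_bdd) auto
    finally show "norm (g \<omega> * (\<Prod>j\<in>J. sN B N (p j) (Y j \<omega>))) \<le> \<bar>g \<omega>\<bar> * (\<Prod>j\<in>J. (\<bar>B\<bar> + 1) ^ p j)"
      by (simp add: abs_mult mult_left_mono)
  qed
qed

lemma ce_int_bdd:
  fixes f :: "'a \<Rightarrow> real"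
  assumes "f \<in> borel_measurable M" "\<And>\<omega>. \<omega> \<in> space M \<Longrightarrow> \<bar>f \<omega>\<bar> \<le> K"
  shows "integrable M (real_cond_exp M G f)"
  by (rule fms.real_cond_exp_int(1)[OF int_bdd[OF assms]])

lemma pow_step:
  fixes c :: "'a \<Rightarrow> real"
  assumes J: "J \<subseteq> I" "finite J" "e \<in> I" "e \<notin> J" and A: "A \<in> sets borel"
    and c: "c \<in> borel_measurable G" "\<And>\<omega>. \<omega> \<in> space M \<Longrightarrow> \<bar>c \<omega>\<bar> \<le> K"
  shows "(\<integral>\<omega>. c \<omega> * indicator A (Y e \<omega>) * (\<Prod>j\<in>J. Y j \<omega> ^ p j) \<partial>M)
       = (\<integral>\<omega>. c \<omega> * real_cond_exp M G (\<lambda>\<omega>. indicator A (Y e \<omega>)) \<omega> * (\<Prod>j\<in>J. Y j \<omega> ^ p j) \<partial>M)"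
proof -
  let ?ce = "real_cond_exp M G"
  define g1 where "g1 = (\<lambda>\<omega>. c \<omega> * indicator A (Y e \<omega>) :: real)"
  define g2 where "g2 = (\<lambda>\<omega>. c \<omega> * ?ce (\<lambda>\<omega>. indicator A (Y e \<omega>)) \<omega>)"
  have cM: "c \<in> borel_measurable M" using Gmeas_M c(1) .
  have indm: "(\<lambda>\<omega>. indicator A (Y e \<omega>) :: real) \<in> borel_measurable M" by (rule ind_meas[OF J(3) A])
  have indb: "\<And>\<omega>. \<bar>indicator A (Y e \<omega>) :: real\<bar> \<le> 1" by (simp add: indicator_def)
  have g1i: "integrable M g1" unfolding g1_def
    by (rule int_bdd[where K=K, OF _ abs_mult_le1[OF c(2) indb]]) (use cM indm in simp_all)
  have "integrable M (\<lambda>\<omega>. ?ce (\<lambda>\<omega>. indicator A (Y e \<omega>)) \<omega> * c \<omega>)"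
    by (rule int_bdd_mult[where K=K, OF ce_int_bdd[OF indm indb] cM c(2)])
  then have g2i: "integrable M g2" unfolding g2_def by (simp add: mult.commute)
  define S where "S = (\<lambda>N::nat. PiE J (\<lambda>_. Zs B N))"
  define a where "a = (\<lambda>N::nat. \<lambda>\<sigma>. \<Prod>j\<in>J. (real_of_int (\<sigma> j) / real (Suc N)) ^ p j)"
  define P where "P = (\<lambda>N::nat. \<lambda>\<sigma> \<omega>. \<Prod>j\<in>J. indicator (Ds N (\<sigma> j)) (Y j \<omega>) :: real)"
  have Sfin: "finite (S N)" for N unfolding S_def using J(2) Zs_finite by (intro finite_PiE) auto
  have Pm: "P N \<sigma> \<in> borel_measurable M" for N \<sigma>
    unfolding P_def by (rule prod_ind_meas[OF J(1)]) (use Ds_borel in auto)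
  have Pb: "\<bar>P N \<sigma> \<omega>\<bar> \<le> 1" for N \<sigma> \<omega> unfolding P_def by (rule prod_ind_bdd)
  have expand: "(\<Prod>j\<in>J. sN B N (p j) (Y j \<omega>)) = (\<Sum>\<sigma>\<in>S N. a N \<sigma> * P N \<sigma> \<omega>)" for N \<omega>
  proof -
    have "(\<Prod>j\<in>J. sN B N (p j) (Y j \<omega>))
        = (\<Sum>\<sigma>\<in>S N. \<Prod>j\<in>J. (real_of_int (\<sigma> j) / real (Suc N)) ^ p j * indicator (Ds N (\<sigma> j)) (Y j \<omega>))"
      unfolding sN_def S_def by (rule prod_sum_PiE) (use J(2) Zs_finite in auto)
    also have "\<dots> = (\<Sum>\<sigma>\<in>S N. a N \<sigma> * P N \<sigma> \<omega>)"
      unfolding a_def P_def by (simp add: prod.distrib)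
    finally show ?thesis .
  qed
  have eqN: "(\<integral>\<omega>. g1 \<omega> * (\<Prod>j\<in>J. sN B N (p j) (Y j \<omega>)) \<partial>M) = (\<integral>\<omega>. g2 \<omega> * (\<Prod>j\<in>J. sN B N (p j) (Y j \<omega>)) \<partial>M)" for N
  proof -
    have "(\<integral>\<omega>. g1 \<omega> * (\<Prod>j\<in>J. sN B N (p j) (Y j \<omega>)) \<partial>M) = (\<integral>\<omega>. g1 \<omega> * (\<Sum>\<sigma>\<in>S N. a N \<sigma> * P N \<sigma> \<omega>) \<partial>M)"
      by (simp only: expand)
    also have "\<dots> = (\<Sum>\<sigma>\<in>S N. a N \<sigma> * (\<integral>\<omega>. g1 \<omega> * P N \<sigma> \<omega> \<partial>M))"
      by (rule int_sum_expand[OF g1i Sfin Pm Pb])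
    also have "\<dots> = (\<Sum>\<sigma>\<in>S N. a N \<sigma> * (\<integral>\<omega>. g2 \<omega> * P N \<sigma> \<omega> \<partial>M))"
    proof (rule sum.cong[OF refl])
      fix \<sigma> assume "\<sigma> \<in> S N"
      have "(\<integral>\<omega>. g1 \<omega> * P N \<sigma> \<omega> \<partial>M) = (\<integral>\<omega>. g2 \<omega> * P N \<sigma> \<omega> \<partial>M)"
        unfolding g1_def g2_def P_def by (rule ind_step[OF J A _ c]) (rule Ds_borel)
      then show "a N \<sigma> * (\<integral>\<omega>. g1 \<omega> * P N \<sigma> \<omega> \<partial>M) = a N \<sigma> * (\<integral>\<omega>. g2 \<omega> * P N \<sigma> \<omega> \<partial>M)" by simp
    qed
    also have "\<dots> = (\<integral>\<omega>. g2 \<omega> * (\<Sum>\<sigma>\<in>S N. a N \<sigma> * P N \<sigma> \<omega>) \<partial>M)"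
      by (rule int_sum_expand[OF g2i Sfin Pm Pb, symmetric])
    also have "\<dots> = (\<integral>\<omega>. g2 \<omega> * (\<Prod>j\<in>J. sN B N (p j) (Y j \<omega>)) \<partial>M)"
      by (simp only: expand)
    finally show ?thesis .
  qed
  have "(\<integral>\<omega>. g1 \<omega> * (\<Prod>j\<in>J. Y j \<omega> ^ p j) \<partial>M) = (\<integral>\<omega>. g2 \<omega> * (\<Prod>j\<in>J. Y j \<omega> ^ p j) \<partial>M)"
    using approx_prod[OF g1i J(1,2), of p] approx_prod[OF g2i J(1,2), of p] unfolding eqN
    by (rule LIMSEQ_unique)
  then show ?thesis unfolding g1_def g2_def .
qed

lemma main_step:
  fixes c :: "'a \<Rightarrow> real"
  assumes J: "J \<subseteq> I" "finite J" "e \<in> I" "e \<notin> J"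
    and c: "c \<in> borel_measurable G" "\<And>\<omega>. \<omega> \<in> space M \<Longrightarrow> \<bar>c \<omega>\<bar> \<le> K"
  shows "(\<integral>\<omega>. Y e \<omega> * (c \<omega> * (\<Prod>j\<in>J. Y j \<omega> ^ p j)) \<partial>M)
       = (\<integral>\<omega>. real_cond_exp M G (Y e) \<omega> * (c \<omega> * (\<Prod>j\<in>J. Y j \<omega> ^ p j)) \<partial>M)"
proof -
  let ?ce = "real_cond_exp M G"
  define W where "W = (\<lambda>\<omega>. c \<omega> * (\<Prod>j\<in>J. Y j \<omega> ^ p j))"
  define W' where "W' = ?ce W"
  define KW where "KW = K * (\<Prod>j\<in>J. \<bar>B\<bar> ^ p j)"
  have cM: "c \<in> borel_measurable M" using Gmeas_M c(1) .
  have Ym: "\<And>j. j \<in> J \<Longrightarrow> Y j \<in> borel_measurable M" using Ymeas J(1) by auto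
  have Wm: "W \<in> borel_measurable M" unfolding W_def
    using cM Ym by (intro borel_measurable_times borel_measurable_prod borel_measurable_power) auto
  have Wb: "\<bar>W \<omega>\<bar> \<le> KW" if \<omega>: "\<omega> \<in> space M" for \<omega>
  proof -
    have "\<bar>\<Prod>j\<in>J. Y j \<omega> ^ p j\<bar> = (\<Prod>j\<in>J. \<bar>Y j \<omega>\<bar> ^ p j)" by (simp add: abs_prod power_abs)
    also have "\<dots> \<le> (\<Prod>j\<in>J. \<bar>B\<bar> ^ p j)"
    proof (rule prod_mono, rule conjI)
      fix j assume "j \<in> J"
      then have "\<bar>Y j \<omega>\<bar> \<le> \<bar>B\<bar>" using Ybdd[of j \<omega>] J(1) \<omega> by force
      then show "\<bar>Y j \<omega>\<bar> ^ p j \<le> \<bar>B\<bar> ^ p j" by (rule power_mono) simp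
    qed simp
    finally show ?thesis unfolding W_def KW_def by (rule abs_mult_le[OF c(2)[OF \<omega>]])
  qed
  have Wi: "integrable M W" by (rule int_bdd[OF Wm Wb])
  have W'i: "integrable M W'" unfolding W'_def by (rule fms.real_cond_exp_int(1)[OF Wi])
  have W'G: "W' \<in> borel_measurable G" unfolding W'_def by (rule borel_measurable_cond_exp)
  have indb: "\<And>A \<omega>. \<bar>indicator A (Y e \<omega>) :: real\<bar> \<le> 1" by (simp add: indicator_def)
  have stepA: "(\<integral>\<omega>. W \<omega> * indicator A (Y e \<omega>) \<partial>M) = (\<integral>\<omega>. W' \<omega> * indicator A (Y e \<omega>) \<partial>M)"
    if A: "A \<in> sets borel" for A
  proof -
    have indm: "(\<lambda>\<omega>. indicator A (Y e \<omega>) :: real) \<in> borel_measurable M" by (rule ind_meas[OF J(3) A])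
    have ci: "integrable M (?ce (\<lambda>\<omega>. indicator A (Y e \<omega>)))"
      by (rule ce_int_bdd[where K=1, OF indm]) (simp add: indicator_def)
    have ciW: "integrable M (\<lambda>\<omega>. ?ce (\<lambda>\<omega>. indicator A (Y e \<omega>)) \<omega> * W \<omega>)"
      using ci Wm Wb by (rule int_bdd_mult)
    have "(\<integral>\<omega>. W \<omega> * indicator A (Y e \<omega>) \<partial>M) = (\<integral>\<omega>. c \<omega> * indicator A (Y e \<omega>) * (\<Prod>j\<in>J. Y j \<omega> ^ p j) \<partial>M)"
      unfolding W_def by (simp add: ac_simps)
    also have "\<dots> = (\<integral>\<omega>. c \<omega> * ?ce (\<lambda>\<omega>. indicator A (Y e \<omega>)) \<omega> * (\<Prod>j\<in>J. Y j \<omega> ^ p j) \<partial>M)"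
      by (rule pow_step[OF J A c])
    also have "\<dots> = (\<integral>\<omega>. ?ce (\<lambda>\<omega>. indicator A (Y e \<omega>)) \<omega> * W \<omega> \<partial>M)"
      unfolding W_def by (simp add: ac_simps)
    also have "\<dots> = (\<integral>\<omega>. ?ce (\<lambda>\<omega>. indicator A (Y e \<omega>)) \<omega> * ?ce W \<omega> \<partial>M)"
      by (rule fms.real_cond_exp_intg(2)[symmetric])
        (rule ciW, rule borel_measurable_cond_exp, rule Wm)
    also have "\<dots> = (\<integral>\<omega>. W' \<omega> * ?ce (\<lambda>\<omega>. indicator A (Y e \<omega>)) \<omega> \<partial>M)"
      unfolding W'_def by (simp add: ac_simps)
    also have "\<dots> = (\<integral>\<omega>. W' \<omega> * indicator A (Y e \<omega>) \<partial>M)"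
      by (rule fms.real_cond_exp_intg(2))
        (rule int_bdd_mult[OF W'i indm indb], rule W'G, rule indm)
    finally show ?thesis .
  qed
  have stepN: "(\<integral>\<omega>. W \<omega> * (\<Prod>j\<in>{e}. sN B N 1 (Y j \<omega>)) \<partial>M) = (\<integral>\<omega>. W' \<omega> * (\<Prod>j\<in>{e}. sN B N 1 (Y j \<omega>)) \<partial>M)" for N
  proof -
    have Pm: "\<And>z. z \<in> Zs B N \<Longrightarrow> (\<lambda>\<omega>. indicator (Ds N z) (Y e \<omega>) :: real) \<in> borel_measurable M"
      by (rule ind_meas[OF J(3) Ds_borel])
    have "(\<integral>\<omega>. W \<omega> * (\<Prod>j\<in>{e}. sN B N 1 (Y j \<omega>)) \<partial>M)
        = (\<integral>\<omega>. W \<omega> * (\<Sum>z\<in>Zs B N. (real_of_int z / real (Suc N)) ^ 1 * indicator (Ds N z) (Y e \<omega>)) \<partial>M)"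
      by (simp add: sN_def)
    also have "\<dots> = (\<Sum>z\<in>Zs B N. (real_of_int z / real (Suc N)) ^ 1 * (\<integral>\<omega>. W \<omega> * indicator (Ds N z) (Y e \<omega>) \<partial>M))"
      by (rule int_sum_expand[OF Wi Zs_finite Pm indb])
    also have "\<dots> = (\<Sum>z\<in>Zs B N. (real_of_int z / real (Suc N)) ^ 1 * (\<integral>\<omega>. W' \<omega> * indicator (Ds N z) (Y e \<omega>) \<partial>M))"
      by (simp only: stepA[OF Ds_borel])
    also have "\<dots> = (\<integral>\<omega>. W' \<omega> * (\<Sum>z\<in>Zs B N. (real_of_int z / real (Suc N)) ^ 1 * indicator (Ds N z) (Y e \<omega>)) \<partial>M)"
      by (rule int_sum_expand[OF W'i Zs_finite Pm indb, symmetric])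
    also have "\<dots> = (\<integral>\<omega>. W' \<omega> * (\<Prod>j\<in>{e}. sN B N 1 (Y j \<omega>)) \<partial>M)"
      by (simp add: sN_def)
    finally show ?thesis .
  qed
  have eJ: "{e} \<subseteq> I" "finite {e}" using J(3) by auto
  have lim: "(\<integral>\<omega>. W \<omega> * (\<Prod>j\<in>{e}. Y j \<omega> ^ 1) \<partial>M) = (\<integral>\<omega>. W' \<omega> * (\<Prod>j\<in>{e}. Y j \<omega> ^ 1) \<partial>M)"
    using approx_prod[OF Wi eJ, of "\<lambda>_. 1"] approx_prod[OF W'i eJ, of "\<lambda>_. 1"] unfolding stepN
    by (rule LIMSEQ_unique)
  have Yem: "Y e \<in> borel_measurable M" using Ymeas J(3) by auto
  have Yeb: "\<And>\<omega>. \<omega> \<in> space M \<Longrightarrow> \<bar>Y e \<omega>\<bar> \<le> B" using Ybdd J(3) by auto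
  have i1: "integrable M (\<lambda>\<omega>. ?ce W \<omega> * Y e \<omega>)"
    using fms.real_cond_exp_int(1)[OF Wi] Yem Yeb by (rule int_bdd_mult)
  have i2: "integrable M (\<lambda>\<omega>. ?ce (Y e) \<omega> * W \<omega>)"
    using ce_int_bdd[OF Yem Yeb] Wm Wb by (rule int_bdd_mult)
  have "(\<integral>\<omega>. Y e \<omega> * W \<omega> \<partial>M) = (\<integral>\<omega>. W' \<omega> * Y e \<omega> \<partial>M)"
    using lim by (simp add: mult.commute)
  also have "\<dots> = (\<integral>\<omega>. W' \<omega> * ?ce (Y e) \<omega> \<partial>M)"
    unfolding W'_def
    by (rule fms.real_cond_exp_intg(2)[symmetric])
      (rule i1, rule borel_measurable_cond_exp, rule Yem)
  also have "\<dots> = (\<integral>\<omega>. ?ce (Y e) \<omega> * ?ce W \<omega> \<partial>M)"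
    unfolding W'_def by (simp add: mult.commute)
  also have "\<dots> = (\<integral>\<omega>. ?ce (Y e) \<omega> * W \<omega> \<partial>M)"
    by (rule fms.real_cond_exp_intg(2))
      (rule i2, rule borel_measurable_cond_exp, rule Wm)
  finally show ?thesis unfolding W_def .
qed

end


lemma prod_abs_le:
  fixes f :: "'q \<Rightarrow> real"
  assumes "\<And>q. q \<in> S \<Longrightarrow> \<bar>f q\<bar> \<le> K"
  shows "\<bar>\<Prod>q\<in>S. f q\<bar> \<le> K ^ card S"
proof -
  have "\<bar>\<Prod>q\<in>S. f q\<bar> = (\<Prod>q\<in>S. \<bar>f q\<bar>)" by (rule abs_prod)
  also have "\<dots> \<le> (\<Prod>q\<in>S. K)" by (rule prod_mono) (use assms in simp)
  also have "\<dots> = K ^ card S" by simp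
  finally show ?thesis .
qed

context ci_setup
begin

lemma Yb': "j \<in> I \<Longrightarrow> \<omega> \<in> space M \<Longrightarrow> \<bar>Y j \<omega>\<bar> \<le> \<bar>B\<bar>"
  using Ybdd[of j \<omega>] by linarith

lemma prod_pow_group:
  fixes h :: "'i \<Rightarrow> real"
  assumes "finite S"
  shows "(\<Prod>q\<in>S. h (\<epsilon> q)) = (\<Prod>j\<in>\<epsilon> ` S. h j ^ card {q \<in> S. \<epsilon> q = j})"
proof -
  have "(\<Prod>q\<in>S. h (\<epsilon> q)) = (\<Prod>j\<in>\<epsilon> ` S. \<Prod>q\<in>{q \<in> S. \<epsilon> q = j}. h (\<epsilon> q))"
    by (rule prod.group[symmetric]) (use assms in auto)
  also have "\<dots> = (\<Prod>j\<in>\<epsilon> ` S. h j ^ card {q \<in> S. \<epsilon> q = j})"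
  proof (rule prod.cong[OF refl])
    fix j assume "j \<in> \<epsilon> ` S"
    have "(\<Prod>q\<in>{q \<in> S. \<epsilon> q = j}. h (\<epsilon> q)) = (\<Prod>q\<in>{q \<in> S. \<epsilon> q = j}. h j)"
      by (rule prod.cong) auto
    then show "(\<Prod>q\<in>{q \<in> S. \<epsilon> q = j}. h (\<epsilon> q)) = h j ^ card {q \<in> S. \<epsilon> q = j}" by simp
  qed
  finally show ?thesis .
qed

lemma vanish:
  fixes c :: "'a \<Rightarrow> real" and \<kappa>' :: "'i \<Rightarrow> 'a \<Rightarrow> real" and \<epsilon> :: "'q \<Rightarrow> 'i"
  assumes Q: "finite Q" "q0 \<in> Q" "\<And>q. q \<in> Q \<Longrightarrow> \<epsilon> q \<in> I" "\<And>q. q \<in> Q \<Longrightarrow> q \<noteq> q0 \<Longrightarrow> \<epsilon> q \<noteq> \<epsilon> q0"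
    and \<kappa>': "\<And>j. j \<in> I \<Longrightarrow> \<kappa>' j \<in> borel_measurable G"
      "\<And>j \<omega>. j \<in> I \<Longrightarrow> \<omega> \<in> space M \<Longrightarrow> \<bar>\<kappa>' j \<omega>\<bar> \<le> 1"
      "AE \<omega> in M. real_cond_exp M G (Y (\<epsilon> q0)) \<omega> = \<kappa>' (\<epsilon> q0) \<omega>"
    and c: "c \<in> borel_measurable G" "\<And>\<omega>. \<omega> \<in> space M \<Longrightarrow> \<bar>c \<omega>\<bar> \<le> K"
  shows "(\<integral>\<omega>. c \<omega> * (\<Prod>q\<in>Q. Y (\<epsilon> q) \<omega> - \<kappa>' (\<epsilon> q) \<omega>) \<partial>M) = 0"
proof -
  define e where "e = \<epsilon> q0"
  define Q' where "Q' = Q - {q0}"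
  have eI: "e \<in> I" using Q e_def by auto
  have Q'fin: "finite Q'" using Q(1) Q'_def by auto
  have cM: "c \<in> borel_measurable M" using Gmeas_M c(1) .
  have \<kappa>'M: "\<And>j. j \<in> I \<Longrightarrow> \<kappa>' j \<in> borel_measurable M" using Gmeas_M \<kappa>'(1) by blast
  have YM: "\<And>j. j \<in> I \<Longrightarrow> Y j \<in> borel_measurable M" using Ymeas by blast
  define cS where "cS = (\<lambda>S \<omega>. c \<omega> * (\<Prod>q\<in>Q'-S. - \<kappa>' (\<epsilon> q) \<omega>))"
  define PS where "PS = (\<lambda>S \<omega>. \<Prod>q\<in>S. Y (\<epsilon> q) \<omega>)"
  have cSG_all: "cS S \<in> borel_measurable G" for S
    unfolding cS_def
  proof (rule borel_measurable_times[OF c(1) borel_measurable_prod])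
    fix q assume "q \<in> Q' - S"
    then have "\<epsilon> q \<in> I" using Q(3) Q'_def by blast
    then show "(\<lambda>\<omega>. - \<kappa>' (\<epsilon> q) \<omega>) \<in> borel_measurable G" by (rule borel_measurable_uminus[OF \<kappa>'(1)])
  qed
  have PSM_all: "PS S \<in> borel_measurable M" if "S \<subseteq> Q" for S
    unfolding PS_def
  proof (rule borel_measurable_prod)
    fix q assume "q \<in> S"
    then have "\<epsilon> q \<in> I" using Q(3) that by blast
    then show "Y (\<epsilon> q) \<in> borel_measurable M" by (rule YM)
  qed
  have expand: "c \<omega> * (\<Prod>q\<in>Q. Y (\<epsilon> q) \<omega> - \<kappa>' (\<epsilon> q) \<omega>)
      = (\<Sum>S\<in>Pow Q'. (Y e \<omega> - \<kappa>' e \<omega>) * (cS S \<omega> * PS S \<omega>))" for \<omega>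
  proof -
    have "(\<Prod>q\<in>Q. Y (\<epsilon> q) \<omega> - \<kappa>' (\<epsilon> q) \<omega>) = (Y e \<omega> - \<kappa>' e \<omega>) * (\<Prod>q\<in>Q'. Y (\<epsilon> q) \<omega> + - \<kappa>' (\<epsilon> q) \<omega>)"
      unfolding Q'_def e_def using Q(1,2) by (simp add: prod.remove)
    also have "(\<Prod>q\<in>Q'. Y (\<epsilon> q) \<omega> + - \<kappa>' (\<epsilon> q) \<omega>) = (\<Sum>S\<in>Pow Q'. (\<Prod>q\<in>S. Y (\<epsilon> q) \<omega>) * (\<Prod>q\<in>Q'-S. - \<kappa>' (\<epsilon> q) \<omega>))"
      by (rule prod_add[OF Q'fin])
    finally show ?thesis unfolding cS_def PS_def
      by (simp add: sum_distrib_left ac_simps)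
  qed
  have term0: "(\<integral>\<omega>. (Y e \<omega> - \<kappa>' e \<omega>) * (cS S \<omega> * PS S \<omega>) \<partial>M) = 0" if S: "S \<in> Pow Q'" for S
  proof -
    have Sfin: "finite S" using S Q'fin by (auto intro: finite_subset)
    have SQ: "\<And>q. q \<in> S \<Longrightarrow> q \<in> Q \<and> q \<noteq> q0" using S Q'_def by blast
    define J where "J = \<epsilon> ` S"
    define p where "p = (\<lambda>j. card {q \<in> S. \<epsilon> q = j})"
    have J1: "J \<subseteq> I" unfolding J_def using SQ Q(3) by blast
    have J2: "finite J" unfolding J_def using Sfin by blast
    have J4: "e \<notin> J"
    proof
      assume "e \<in> J"
      then obtain q where q: "q \<in> S" "\<epsilon> q = e" unfolding J_def by blast
      then show False using SQ[OF q(1)] Q(4) unfolding e_def by blast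
    qed
    note J = J1 J2 eI J4
    have PS_eq: "PS S \<omega> = (\<Prod>j\<in>J. Y j \<omega> ^ p j)" for \<omega>
      unfolding PS_def J_def p_def by (rule prod_pow_group[OF Sfin])
    have cSG: "cS S \<in> borel_measurable G" by (rule cSG_all)
    have cSb: "\<bar>cS S \<omega>\<bar> \<le> K" if \<omega>: "\<omega> \<in> space M" for \<omega>
    proof -
      have "\<bar>\<Prod>q\<in>Q'-S. - \<kappa>' (\<epsilon> q) \<omega>\<bar> \<le> 1 ^ card (Q'-S)"
      proof (rule prod_abs_le)
        fix q assume "q \<in> Q' - S"
        then have "q \<in> Q" unfolding Q'_def by blast
        then show "\<bar>- \<kappa>' (\<epsilon> q) \<omega>\<bar> \<le> 1" using \<kappa>'(2)[OF Q(3) \<omega>] by simp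
      qed
      then have "\<bar>\<Prod>q\<in>Q'-S. - \<kappa>' (\<epsilon> q) \<omega>\<bar> \<le> 1" by simp
      then show ?thesis unfolding cS_def by (rule abs_mult_le1[OF c(2)[OF \<omega>]])
    qed
    have cSM: "cS S \<in> borel_measurable M" using Gmeas_M cSG .
    have PSM: "PS S \<in> borel_measurable M" by (rule PSM_all) (use SQ in blast)
    have PSb: "\<bar>PS S \<omega>\<bar> \<le> \<bar>B\<bar> ^ card S" if \<omega>: "\<omega> \<in> space M" for \<omega>
      unfolding PS_def by (rule prod_abs_le) (rule Yb'[OF Q(3) \<omega>], use SQ in blast)
    have Wb: "\<bar>cS S \<omega> * PS S \<omega>\<bar> \<le> K * \<bar>B\<bar> ^ card S" if \<omega>: "\<omega> \<in> space M" for \<omega>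
      by (rule abs_mult_le[OF cSb[OF \<omega>] PSb[OF \<omega>]])
    have WM: "(\<lambda>\<omega>. cS S \<omega> * PS S \<omega>) \<in> borel_measurable M" by (rule borel_measurable_times[OF cSM PSM])
    have Wi: "integrable M (\<lambda>\<omega>. cS S \<omega> * PS S \<omega>)" by (rule int_bdd[OF WM Wb])
    have i1: "integrable M (\<lambda>\<omega>. Y e \<omega> * (cS S \<omega> * PS S \<omega>))"
      using int_bdd_mult[OF Wi YM[OF eI] Ybdd[OF eI]] by (simp add: mult.commute)
    have i2: "integrable M (\<lambda>\<omega>. \<kappa>' e \<omega> * (cS S \<omega> * PS S \<omega>))"
      using int_bdd_mult[OF Wi \<kappa>'M[OF eI] \<kappa>'(2)[OF eI]] by (simp add: mult.commute)
    have "(\<integral>\<omega>. Y e \<omega> * (cS S \<omega> * PS S \<omega>) \<partial>M) = (\<integral>\<omega>. real_cond_exp M G (Y e) \<omega> * (cS S \<omega> * PS S \<omega>) \<partial>M)"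
      unfolding PS_eq by (rule main_step[OF J cSG cSb])
    also have "\<dots> = (\<integral>\<omega>. \<kappa>' e \<omega> * (cS S \<omega> * PS S \<omega>) \<partial>M)"
    proof (rule integral_cong_AE)
      show "AE \<omega> in M. real_cond_exp M G (Y e) \<omega> * (cS S \<omega> * PS S \<omega>) = \<kappa>' e \<omega> * (cS S \<omega> * PS S \<omega>)"
        using \<kappa>'(3) unfolding e_def by eventually_elim simp
    qed (rule borel_measurable_times[OF borel_measurable_cond_exp2 WM], rule borel_measurable_times[OF \<kappa>'M[OF eI] WM])
    finally have "(\<integral>\<omega>. Y e \<omega> * (cS S \<omega> * PS S \<omega>) \<partial>M) - (\<integral>\<omega>. \<kappa>' e \<omega> * (cS S \<omega> * PS S \<omega>) \<partial>M) = 0"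
      by simp
    then have "(\<integral>\<omega>. Y e \<omega> * (cS S \<omega> * PS S \<omega>) - \<kappa>' e \<omega> * (cS S \<omega> * PS S \<omega>) \<partial>M) = 0"
      using i1 i2 by simp
    then show ?thesis by (simp add: left_diff_distrib)
  qed
  have inti: "integrable M (\<lambda>\<omega>. (Y e \<omega> - \<kappa>' e \<omega>) * (cS S \<omega> * PS S \<omega>))" if S: "S \<in> Pow Q'" for S
  proof -
    have SQ: "\<And>q. q \<in> S \<Longrightarrow> q \<in> Q" using S Q'_def by blast
    have cSM: "cS S \<in> borel_measurable M" by (rule Gmeas_M[OF cSG_all])
    have PSM: "PS S \<in> borel_measurable M" by (rule PSM_all) (use SQ in blast)
    have "(\<lambda>\<omega>. (Y e \<omega> - \<kappa>' e \<omega>) * (cS S \<omega> * PS S \<omega>)) \<in> borel_measurable M"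
      by (rule borel_measurable_times[OF borel_measurable_diff[OF YM[OF eI] \<kappa>'M[OF eI]] borel_measurable_times[OF cSM PSM]])
    moreover have "\<bar>(Y e \<omega> - \<kappa>' e \<omega>) * (cS S \<omega> * PS S \<omega>)\<bar> \<le> (\<bar>B\<bar> + 1) * (\<bar>K\<bar> * \<bar>B\<bar> ^ card S)"
      if \<omega>: "\<omega> \<in> space M" for \<omega>
    proof -
      have 1: "\<bar>Y e \<omega> - \<kappa>' e \<omega>\<bar> \<le> \<bar>B\<bar> + 1" using Yb'[OF eI \<omega>] \<kappa>'(2)[OF eI \<omega>] by linarith
      have "\<bar>\<Prod>q\<in>Q'-S. - \<kappa>' (\<epsilon> q) \<omega>\<bar> \<le> 1 ^ card (Q'-S)"
      proof (rule prod_abs_le)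
        fix q assume "q \<in> Q' - S"
        then have "q \<in> Q" unfolding Q'_def by blast
        then show "\<bar>- \<kappa>' (\<epsilon> q) \<omega>\<bar> \<le> 1" using \<kappa>'(2)[OF Q(3) \<omega>] by simp
      qed
      then have "\<bar>\<Prod>q\<in>Q'-S. - \<kappa>' (\<epsilon> q) \<omega>\<bar> \<le> 1" by simp
      moreover have "\<bar>c \<omega>\<bar> \<le> \<bar>K\<bar>" using c(2)[OF \<omega>] by linarith
      ultimately have 2: "\<bar>cS S \<omega>\<bar> \<le> \<bar>K\<bar>" unfolding cS_def by (intro abs_mult_le1)
      have 3: "\<bar>PS S \<omega>\<bar> \<le> \<bar>B\<bar> ^ card S"
        unfolding PS_def by (rule prod_abs_le) (rule Yb'[OF Q(3) \<omega>], use SQ in blast)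
      show ?thesis by (rule abs_mult_le[OF 1 abs_mult_le[OF 2 3]])
    qed
    ultimately show ?thesis by (rule int_bdd)
  qed
  have "(\<integral>\<omega>. c \<omega> * (\<Prod>q\<in>Q. Y (\<epsilon> q) \<omega> - \<kappa>' (\<epsilon> q) \<omega>) \<partial>M)
      = (\<integral>\<omega>. (\<Sum>S\<in>Pow Q'. (Y e \<omega> - \<kappa>' e \<omega>) * (cS S \<omega> * PS S \<omega>)) \<partial>M)"
    by (rule Bochner_Integration.integral_cong[OF refl]) (rule expand)
  also have "\<dots> = (\<Sum>S\<in>Pow Q'. (\<integral>\<omega>. (Y e \<omega> - \<kappa>' e \<omega>) * (cS S \<omega> * PS S \<omega>) \<partial>M))"
    by (rule Bochner_Integration.integral_sum[where f="\<lambda>S \<omega>. (Y e \<omega> - \<kappa>' e \<omega>) * (cS S \<omega> * PS S \<omega>)"])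
      (rule inti)
  also have "\<dots> = 0" using term0 by simp
  finally show ?thesis .
qed

end


definition good :: "nat \<Rightarrow> nat list \<Rightarrow> (nat \<Rightarrow> nat list) \<Rightarrow> bool" where
  "good m a b \<longleftrightarrow> (\<forall>l<m. \<forall>x\<in>set (b l) - set a. \<exists>l'<m. l' \<noteq> l \<and> x \<in> set (b l'))"

lemma incr_tuplesD:
  assumes "a \<in> incr_tuples n k"
  shows "length a = k" "sorted_wrt (<) a" "set a \<subseteq> {1..n}" "distinct a" "card (set a) = k"
proof -
  show l: "length a = k" and s: "sorted_wrt (<) a" and "set a \<subseteq> {1..n}"
    using assms by (auto simp: incr_tuples_def)
  show d: "distinct a" using s by (simp add: strict_sorted_iff)
  show "card (set a) = k" using distinct_card[OF d] l by simp
qed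

lemma card_incr_tuples: "card (incr_tuples n k) \<le> n ^ k" "finite (incr_tuples n k)"
proof -
  have sub: "incr_tuples n k \<subseteq> {xs. set xs \<subseteq> {1..n} \<and> length xs = k}"
    by (auto simp: incr_tuples_def)
  have f: "finite {xs. set xs \<subseteq> {1..n} \<and> length xs = k}" by (rule finite_lists_length_eq) simp
  show "finite (incr_tuples n k)" by (rule finite_subset[OF sub f])
  have "card (incr_tuples n k) \<le> card {xs. set xs \<subseteq> {1..n} \<and> length xs = k}"
    by (rule card_mono[OF f sub])
  also have "\<dots> = n ^ k" by (simp add: card_lists_length_eq)
  finally show "card (incr_tuples n k) \<le> n ^ k" .
qed

lemma finite_nbhd: "finite (nbhd n ki kj a)"
  unfolding nbhd_def using card_incr_tuples(2) by auto

lemma card_out: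
  assumes a: "a \<in> incr_tuples n ki" and b: "b \<in> nbhd n ki kj a"
  shows "card (set b - set a) \<le> kj - min 2 ki"
proof -
  have bi: "b \<in> incr_tuples n kj" and c: "card (set a \<inter> set b) \<ge> min 2 ki" using b by (auto simp: nbhd_def)
  have "card (set b - set a) = card (set b) - card (set b \<inter> set a)"
    by (rule card_Diff_subset_Int) simp
  also have "\<dots> = kj - card (set a \<inter> set b)" using incr_tuplesD(5)[OF bi] by (simp add: Int_commute)
  finally show ?thesis using c by linarith
qed

lemma double_count:
  fixes Bl :: "nat \<Rightarrow> nat set"
  assumes W: "finite W" and Bl: "\<And>l. l < m \<Longrightarrow> Bl l \<subseteq> W" "\<And>l. l < m \<Longrightarrow> finite (Bl l)"
    and two: "\<And>x. x \<in> W \<Longrightarrow> card {l \<in> {..<m}. x \<in> Bl l} \<ge> 2"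
  shows "2 * card W \<le> (\<Sum>l<m. card (Bl l))"
proof -
  have "(\<Sum>l<m. card (Bl l)) = card (SIGMA l:{..<m}. Bl l)"
    using Bl(2) by (subst card_SigmaI) auto
  also have "card (SIGMA l:{..<m}. Bl l) = card (prod.swap ` (SIGMA l:{..<m}. Bl l))"
    by (rule card_image[symmetric]) (simp add: inj_on_def)
  also have "prod.swap ` (SIGMA l:{..<m}. Bl l) = (SIGMA x:W. {l \<in> {..<m}. x \<in> Bl l})"
    using Bl(1) by (auto simp: image_iff) blast
  also have "card (SIGMA x:W. {l \<in> {..<m}. x \<in> Bl l}) = (\<Sum>x\<in>W. card {l \<in> {..<m}. x \<in> Bl l})"
    using W by (subst card_SigmaI) auto
  also have "\<dots> \<ge> (\<Sum>x\<in>W. 2)" by (rule sum_mono) (rule two)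
  finally show ?thesis by (simp add: mult.commute)
qed

lemma card_W:
  assumes a: "a \<in> incr_tuples n ki" and b: "b \<in> PiE {..<m} (\<lambda>_. nbhd n ki kj a)" and g: "good m a b"
  defines "W \<equiv> (\<Union>l<m. set (b l)) - set a"
  shows "card W \<le> (kj - min 2 ki) * m div 2" "finite W" "W \<subseteq> {1..n}"
proof -
  have bl: "\<And>l. l < m \<Longrightarrow> b l \<in> nbhd n ki kj a" using b by auto
  have bli: "\<And>l. l < m \<Longrightarrow> b l \<in> incr_tuples n kj" using bl by (auto simp: nbhd_def)
  show "W \<subseteq> {1..n}" unfolding W_def using incr_tuplesD(3)[OF bli] by blast
  then show Wf: "finite W" by (rule finite_subset) simp
  have "2 * card W \<le> (\<Sum>l<m. card (set (b l) - set a))"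
  proof (rule double_count[OF Wf])
    fix x assume x: "x \<in> W"
    then obtain l0 where l0: "l0 < m" "x \<in> set (b l0)" "x \<notin> set a" unfolding W_def by blast
    then obtain l' where l': "l' < m" "l' \<noteq> l0" "x \<in> set (b l')" using g unfolding good_def by blast
    have "{l0, l'} \<subseteq> {l \<in> {..<m}. x \<in> set (b l) - set a}" using l0 l' by auto
    then have "card {l0, l'} \<le> card {l \<in> {..<m}. x \<in> set (b l) - set a}" by (rule card_mono[rotated]) simp
    then show "card {l \<in> {..<m}. x \<in> set (b l) - set a} \<ge> 2" using l'(2) by simp
  qed (auto simp: W_def)
  also have "\<dots> \<le> (\<Sum>l<m. kj - min 2 ki)" by (rule sum_mono) (rule card_out[OF a bl], simp)
  also have "\<dots> = (kj - min 2 ki) * m" by simp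
  finally show "card W \<le> (kj - min 2 ki) * m div 2" by linarith
qed

lemma count_good:
  fixes m ki kj n :: nat
  assumes n: "n \<ge> 1"
  defines "r \<equiv> (kj - min 2 ki) * m div 2"
  shows "card {(a, b). a \<in> incr_tuples n ki \<and> b \<in> PiE {..<m} (\<lambda>_. nbhd n ki kj a) \<and> good m a b}
         \<le> n ^ (ki + r) * (ki + r) ^ (kj * m)"
proof -
  define Wl where "Wl = {w. set w \<subseteq> {1..n} \<and> length w = r}"
  define Gs where "Gs = PiE {..<m} (\<lambda>_. PiE {..<kj} (\<lambda>_. {..<ki + r}))"
  define P where "P = incr_tuples n ki \<times> Wl \<times> Gs"
  define f where "f = (\<lambda>(a::nat list, w::nat list, g::nat \<Rightarrow> nat \<Rightarrow> nat).
      (a, \<lambda>l\<in>{..<m}. map (\<lambda>p. (a @ w) ! (g l p)) [0..<kj]))"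
  have Wlf: "finite Wl" unfolding Wl_def by (rule finite_lists_length_eq) simp
  have Gsf: "finite Gs" unfolding Gs_def by (intro finite_PiE) auto
  have Pf: "finite P" unfolding P_def using card_incr_tuples(2) Wlf Gsf by simp
  have sub: "{(a, b). a \<in> incr_tuples n ki \<and> b \<in> PiE {..<m} (\<lambda>_. nbhd n ki kj a) \<and> good m a b} \<subseteq> f ` P"
  proof (rule subsetI, clarify)
    fix a b assume a: "a \<in> incr_tuples n ki" and b: "b \<in> PiE {..<m} (\<lambda>_. nbhd n ki kj a)" and g: "good m a b"
    define W where "W = (\<Union>l<m. set (b l)) - set a"
    have cW: "card W \<le> r" "finite W" "W \<subseteq> {1..n}" using card_W[OF a b g] unfolding W_def r_def by auto
    define w where "w = sorted_list_of_set W @ replicate (r - card W) 1"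
    have lw: "length w = r" using cW(1) unfolding w_def by simp
    have sw: "set w \<subseteq> {1..n}" using cW(2,3) n unfolding w_def by auto
    have Wsub: "W \<subseteq> set w" using cW(2) unfolding w_def by auto
    have la: "length a = ki" by (rule incr_tuplesD(1)[OF a])
    have bl: "\<And>l. l < m \<Longrightarrow> b l \<in> incr_tuples n kj" using b by (auto simp: nbhd_def)
    have ex: "\<exists>i. i < ki + r \<and> (a @ w) ! i = b l ! p" if l: "l < m" and p: "p < kj" for l p
    proof -
      have "b l ! p \<in> set (b l)" using p incr_tuplesD(1)[OF bl[OF l]] by simp
      then have "b l ! p \<in> set (a @ w)" using Wsub l unfolding W_def by auto
      then obtain i where "i < length (a @ w)" "(a @ w) ! i = b l ! p" by (metis in_set_conv_nth)
      then show ?thesis using la lw by auto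
    qed
    define g where "g = (\<lambda>l\<in>{..<m}. \<lambda>p\<in>{..<kj}. SOME i. i < ki + r \<and> (a @ w) ! i = b l ! p)"
    have gp: "g l p < ki + r \<and> (a @ w) ! (g l p) = b l ! p" if "l < m" "p < kj" for l p
      using someI_ex[OF ex[OF that]] that unfolding g_def by simp
    have gG: "g \<in> Gs" unfolding Gs_def g_def using gp by (auto simp: g_def)
    have "f (a, w, g) = (a, b)"
    proof -
      have "(\<lambda>l\<in>{..<m}. map (\<lambda>p. (a @ w) ! (g l p)) [0..<kj]) = b"
      proof (rule ext)
        fix l show "(\<lambda>l\<in>{..<m}. map (\<lambda>p. (a @ w) ! (g l p)) [0..<kj]) l = b l"
        proof (cases "l < m")
          case True
          have "map (\<lambda>p. (a @ w) ! (g l p)) [0..<kj] = b l"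
            by (rule nth_equalityI) (use incr_tuplesD(1)[OF bl[OF True]] gp[OF True] in auto)
          then show ?thesis using True by simp
        next
          case False
          then show ?thesis using b by (auto simp: PiE_def extensional_def)
        qed
      qed
      then show ?thesis unfolding f_def by simp
    qed
    moreover have "(a, w, g) \<in> P" unfolding P_def Wl_def using a sw lw gG by simp
    ultimately show "(a, b) \<in> f ` P" by force
  qed
  have "card {(a, b). a \<in> incr_tuples n ki \<and> b \<in> PiE {..<m} (\<lambda>_. nbhd n ki kj a) \<and> good m a b} \<le> card (f ` P)"
    by (rule card_mono[OF finite_imageI[OF Pf] sub])
  also have "\<dots> \<le> card P" by (rule card_image_le[OF Pf])
  also have "card P = card (incr_tuples n ki) * card Wl * card Gs"
    unfolding P_def by (simp add: card_cartesian_product)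
  also have "card Wl = n ^ r" unfolding Wl_def by (simp add: card_lists_length_eq)
  also have "card Gs = (ki + r) ^ (kj * m)" unfolding Gs_def by (simp add: card_PiE power_mult)
  also have "card (incr_tuples n ki) * n ^ r * (ki + r) ^ (kj * m) \<le> n ^ ki * n ^ r * (ki + r) ^ (kj * m)"
    using card_incr_tuples(1) by (intro mult_right_mono) auto
  finally show ?thesis by (simp add: power_add)
qed


definition epsb :: "(nat \<Rightarrow> nat list) \<Rightarrow> nat \<times> nat \<times> nat \<Rightarrow> nat \<times> nat" where
  "epsb b q = (b (fst q) ! fst (snd q), b (fst q) ! snd (snd q))"

lemma graph_edge: "connected_graph k E \<Longrightarrow> (v, w) \<in> E \<Longrightarrow> v < w \<and> w < k"
  unfolding connected_graph_def by blast

lemma graph_finite: "connected_graph k E \<Longrightarrow> finite E"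
  unfolding connected_graph_def
  by (rule finite_subset[of _ "{..<k} \<times> {..<k}"]) auto

lemma eps_in_I:
  assumes bl: "b l \<in> incr_tuples n kj" and E: "connected_graph kj E" and ed: "ed \<in> E"
  shows "1 \<le> fst (epsb b (l, ed)) \<and> fst (epsb b (l, ed)) < snd (epsb b (l, ed)) \<and> snd (epsb b (l, ed)) \<le> n"
proof -
  obtain v w where vw: "ed = (v, w)" by (cases ed)
  have vw2: "v < w" "w < kj" using graph_edge[OF E ed[unfolded vw]] by auto
  have len: "length (b l) = kj" and s: "sorted_wrt (<) (b l)" and st: "set (b l) \<subseteq> {1..n}"
    using incr_tuplesD[OF bl] by auto
  have "b l ! v < b l ! w" using sorted_wrt_nth_less[OF s vw2(1)] vw2 len by simp
  moreover have "v < length (b l)" using vw2 len by simp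
  then have "b l ! v \<in> {1..n}" using st nth_mem[of v "b l"] by blast
  moreover have "w < length (b l)" using vw2 len by simp
  then have "b l ! w \<in> {1..n}" using st nth_mem[of w "b l"] by blast
  ultimately show ?thesis unfolding epsb_def vw by auto
qed

lemma bad_edge:
  assumes a: "a \<in> incr_tuples n ki" and b: "b \<in> PiE {..<m} (\<lambda>_. nbhd n ki kj a)"
    and bad: "\<not> good m a b" and E: "connected_graph kj E" and ki: "ki \<ge> 1"
  shows "kj \<noteq> 1" "\<exists>q0 \<in> {..<m} \<times> E. \<forall>q \<in> {..<m} \<times> E. q \<noteq> q0 \<longrightarrow> epsb b q \<noteq> epsb b q0"
proof -
  obtain l x where l: "l < m" and x: "x \<in> set (b l)" "x \<notin> set a"
    and only: "\<And>l'. l' < m \<Longrightarrow> l' \<noteq> l \<Longrightarrow> x \<notin> set (b l')"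
    using bad unfolding good_def by blast
  have bl: "\<And>l. l < m \<Longrightarrow> b l \<in> nbhd n ki kj a" using b by auto
  have bli: "\<And>l. l < m \<Longrightarrow> b l \<in> incr_tuples n kj" using bl by (auto simp: nbhd_def)
  have len: "length (b l) = kj" and dist: "distinct (b l)" using incr_tuplesD[OF bli[OF l]] by auto
  show kj: "kj \<noteq> 1"
  proof
    assume kj1: "kj = 1"
    have c: "card (set a \<inter> set (b l)) \<ge> 1" using bl[OF l] ki unfolding nbhd_def by auto
    have "card (set (b l)) = 1" using incr_tuplesD(5)[OF bli[OF l]] kj1 by simp
    then obtain y where y: "set (b l) = {y}" by (auto simp: card_Suc_eq)
    then have "set a \<inter> set (b l) \<noteq> {}" using c by (metis card.empty not_one_le_zero)
    then have "y \<in> set a" using y by auto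
    then show False using x y by auto
  qed
  then have kj2: "kj \<ge> 2" using incr_tuplesD(1)[OF bli[OF l]] len x by (cases kj) auto
  obtain p where p: "p < kj" "b l ! p = x" using x len by (metis in_set_conv_nth)
  define p' where "p' = (if p = 0 then 1 else (0::nat))"
  have p': "p' < kj" "p' \<noteq> p" using kj2 p unfolding p'_def by auto
  have "(p, p') \<in> (E \<union> E\<inverse>)\<^sup>*" using E p p' unfolding connected_graph_def by blast
  then obtain y where "(p, y) \<in> E \<union> E\<inverse>"
    by (rule converse_rtranclE) (use p' in auto)
  then obtain ed where ed: "ed \<in> E" "fst ed = p \<or> snd ed = p" by auto
  define q0 where "q0 = (l, ed)"
  have ed2: "fst ed < snd ed" "snd ed < kj" using graph_edge[OF E, of "fst ed" "snd ed"] ed(1) by auto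
  show "\<exists>q0 \<in> {..<m} \<times> E. \<forall>q \<in> {..<m} \<times> E. q \<noteq> q0 \<longrightarrow> epsb b q \<noteq> epsb b q0"
  proof (intro bexI[of _ q0] ballI impI)
    show "q0 \<in> {..<m} \<times> E" using l ed unfolding q0_def by auto
    fix q assume q: "q \<in> {..<m} \<times> E" "q \<noteq> q0"
    obtain l' ed' where q': "q = (l', ed')" by (cases q)
    have l': "l' < m" "ed' \<in> E" using q q' by auto
    have ed2': "fst ed' < snd ed'" "snd ed' < kj" using graph_edge[OF E, of "fst ed'" "snd ed'"] l'(2) by auto
    show "epsb b q \<noteq> epsb b q0"
    proof
      assume eq: "epsb b q = epsb b q0"
      then have e1: "b l' ! fst ed' = b l ! fst ed" and e2: "b l' ! snd ed' = b l ! snd ed"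
        unfolding epsb_def q' q0_def by auto
      have len': "length (b l') = kj" using incr_tuplesD(1)[OF bli[OF l'(1)]] .
      show False
      proof (cases "l' = l")
        case True
        have "fst ed' = fst ed" using e1 True nth_eq_iff_index_eq[OF dist] ed2 ed2' len by auto
        moreover have "snd ed' = snd ed" using e2 True nth_eq_iff_index_eq[OF dist] ed2 ed2' len by auto
        ultimately have "ed' = ed" by (simp add: prod_eq_iff)
        then show False using q(2) q' q0_def True by simp
      next
        case False
        have "x \<in> set (b l')"
        proof (cases "fst ed = p")
          case True
          then have "x = b l' ! fst ed'" using e1 p by simp
          then show ?thesis using ed2' len' by simp
        next
          case False
          then have "snd ed = p" using ed(2) by blast
          then have "x = b l' ! snd ed'" using e2 p by simp
          then show ?thesis using ed2' len' by simp
        qed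
        then show False using only[OF l'(1) False] by simp
      qed
    qed
  qed
qed


lemma (in prob_space) abs_int_le:
  fixes f :: "'a \<Rightarrow> real"
  assumes "f \<in> borel_measurable M" "\<And>\<omega>. \<omega> \<in> space M \<Longrightarrow> \<bar>f \<omega>\<bar> \<le> K"
  shows "\<bar>integral\<^sup>L M f\<bar> \<le> K"
proof -
  have i: "integrable M (\<lambda>\<omega>. \<bar>f \<omega>\<bar>)"
    by (rule integrable_const_bound[where B=K]) (use assms in auto)
  have "\<bar>integral\<^sup>L M f\<bar> \<le> (\<integral>\<omega>. \<bar>f \<omega>\<bar> \<partial>M)" by (rule integral_abs_bound)
  also have "\<dots> \<le> K" by (rule integral_le_const[OF i]) (use assms in auto)
  finally show ?thesis .
qed

lemma gen_sigma_facts: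
  assumes U: "\<And>v. v \<in> V \<Longrightarrow> U v \<in> borel_measurable M"
  shows "subalgebra M (gen_sigma M U V)" "\<And>v. v \<in> V \<Longrightarrow> U v \<in> borel_measurable (gen_sigma M U V)"
proof -
  define A where "A = (\<Union>i\<in>V. {U i -` B \<inter> space M | B. B \<in> sets borel})"
  have AP: "A \<subseteq> Pow (space M)" unfolding A_def by auto
  have AM: "A \<subseteq> sets M" unfolding A_def using U by (auto intro: measurable_sets)
  have sp: "space (gen_sigma M U V) = space M" unfolding gen_sigma_def A_def[symmetric]
    using AP by simp
  have st: "sets (gen_sigma M U V) = sigma_sets (space M) A" unfolding gen_sigma_def A_def[symmetric]
    using AP by simp
  show "subalgebra M (gen_sigma M U V)" unfolding subalgebra_def sp st
    using sets.sigma_sets_subset[OF AM] by simp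
  fix v assume v: "v \<in> V"
  show "U v \<in> borel_measurable (gen_sigma M U V)"
  proof (rule measurableI)
    fix B :: "real set" assume "B \<in> sets borel"
    then have "U v -` B \<inter> space M \<in> A" unfolding A_def using v by blast
    then show "U v -` B \<inter> space (gen_sigma M U V) \<in> sets (gen_sigma M U V)"
      unfolding sp st by (rule sigma_sets.Basic)
  qed simp
qed

lemma Uvec_cube:
  assumes "set a \<subseteq> V" "\<And>v. v \<in> V \<Longrightarrow> U v \<omega> \<in> {0..1}"
  shows "Uvec U a \<omega> \<in> unit_cube (length a)"
proof -
  have "U (a ! v) \<omega> \<in> {0..1}" if "v < length a" for v
    using assms(2)[of "a ! v"] assms(1) nth_mem[OF that] by blast
  then show ?thesis unfolding Uvec_def unit_cube_def by auto
qed

lemma Uvec_meas: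
  assumes a: "set a \<subseteq> V" and U: "\<And>v. v \<in> V \<Longrightarrow> U v \<in> borel_measurable N"
    and R: "\<And>v \<omega>. v \<in> V \<Longrightarrow> \<omega> \<in> space N \<Longrightarrow> U v \<omega> \<in> {0..1}"
    and \<psi>: "\<psi> \<in> borel_measurable (restrict_space (PiM {..<length a} (\<lambda>_. borel)) (unit_cube (length a)))"
  shows "(\<lambda>\<omega>. \<psi> (Uvec U a \<omega>)) \<in> borel_measurable N"
proof -
  have m: "(\<lambda>\<omega>. Uvec U a \<omega>) \<in> measurable N (PiM {..<length a} (\<lambda>_. borel))"
    unfolding Uvec_def
  proof (rule measurable_restrict)
    fix i assume "i \<in> {..<length a}"
    then have "a ! i \<in> V" using a by auto
    then show "U (a ! i) \<in> borel_measurable N" by (rule U)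
  qed
  have "(\<lambda>\<omega>. Uvec U a \<omega>) \<in> measurable N (restrict_space (PiM {..<length a} (\<lambda>_. borel)) (unit_cube (length a)))"
  proof (rule measurable_restrict_space2[OF _ m], rule funcsetI)
    fix \<omega> assume "\<omega> \<in> space N"
    then show "Uvec U a \<omega> \<in> unit_cube (length a)" using R by (intro Uvec_cube[OF a]) auto
  qed
  then show ?thesis using \<psi> by (rule measurable_compose)
qed

lemma kappa_meas:
  assumes \<kappa>: "graphon \<kappa>" and U: "U v \<in> borel_measurable N" "U w \<in> borel_measurable N"
    and R: "\<And>\<omega>. \<omega> \<in> space N \<Longrightarrow> U v \<omega> \<in> {0..1}" "\<And>\<omega>. \<omega> \<in> space N \<Longrightarrow> U w \<omega> \<in> {0..1}"
  shows "(\<lambda>\<omega>. \<kappa> (U v \<omega>) (U w \<omega>)) \<in> borel_measurable N"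
proof -
  have m: "(\<lambda>\<omega>. (U v \<omega>, U w \<omega>)) \<in> measurable N (borel \<Otimes>\<^sub>M borel)"
    using U by (rule measurable_Pair)
  have "(\<lambda>\<omega>. (U v \<omega>, U w \<omega>)) \<in> measurable N (restrict_space (borel \<Otimes>\<^sub>M borel) ({0..1} \<times> {0..1}))"
    by (rule measurable_restrict_space2[OF _ m]) (use R in auto)
  moreover have "case_prod \<kappa> \<in> borel_measurable (restrict_space (borel \<Otimes>\<^sub>M borel) ({0..1} \<times> {0..1}))"
    using \<kappa> unfolding graphon_def by blast
  ultimately have "(\<lambda>\<omega>. case_prod \<kappa> (U v \<omega>, U w \<omega>)) \<in> borel_measurable N"
    by (rule measurable_compose)
  then show ?thesis by simp
qed

lemma scaled_in_D:
  assumes a: "a \<in> incr_tuples n k"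
  shows "scaled n a \<in> simplex_D (length a)"
proof -
  have s: "sorted_wrt (<) a" using incr_tuplesD(2)[OF a] .
  have "real (a ! v) / real n \<le> real (a ! w) / real n" if "v \<le> w" "w < length a" for v w
  proof (cases "v = w")
    case False
    then have "a ! v < a ! w" using sorted_wrt_nth_less[OF s, of v w] that by simp
    then show ?thesis by (intro divide_right_mono) auto
  qed simp
  then show ?thesis unfolding simplex_D_def scaled_def by auto
qed


lemma per_n:
  fixes M :: "'a measure" and U :: "nat \<Rightarrow> 'a \<Rightarrow> real" and Y :: "nat \<Rightarrow> nat \<Rightarrow> 'a \<Rightarrow> real"
    and n ki kj m :: nat and E :: "(nat \<times> nat) set" and \<phi> \<psi> :: "(nat \<Rightarrow> real) \<Rightarrow> real"
    and \<kappa> :: "real \<Rightarrow> real \<Rightarrow> real" and B cphi cpsi :: real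
  assumes M: "prob_space M"
    and Um: "\<And>v. v \<in> {1..n} \<Longrightarrow> U v \<in> borel_measurable M"
    and UR: "\<And>v \<omega>. v \<in> {1..n} \<Longrightarrow> \<omega> \<in> space M \<Longrightarrow> U v \<omega> \<in> {0..1}"
    and Ym: "\<And>v w. 1 \<le> v \<Longrightarrow> v < w \<Longrightarrow> w \<le> n \<Longrightarrow> Y v w \<in> borel_measurable M"
    and Yb: "\<And>v w \<omega>. 1 \<le> v \<Longrightarrow> v < w \<Longrightarrow> w \<le> n \<Longrightarrow> \<omega> \<in> space M \<Longrightarrow> \<bar>Y v w \<omega>\<bar> \<le> B"
    and Yci: "cond_indep_vars M (gen_sigma M U {1..n}) (\<lambda>(v, w). Y v w) {(v, w). 1 \<le> v \<and> v < w \<and> w \<le> n}"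
    and Yce: "\<And>v w. 1 \<le> v \<Longrightarrow> v < w \<Longrightarrow> w \<le> n \<Longrightarrow>
        AE \<omega> in M. real_cond_exp M (gen_sigma M U {1..n}) (Y v w) \<omega> = \<kappa> (U v \<omega>) (U w \<omega>)"
    and \<kappa>: "graphon \<kappa>"
    and E: "connected_graph kj E"
    and ki: "ki \<ge> 1"
    and \<phi>b: "\<And>x. x \<in> simplex_D kj \<Longrightarrow> \<bar>\<phi> x\<bar> \<le> cphi"
    and \<psi>m: "\<psi> \<in> borel_measurable (restrict_space (PiM {..<kj} (\<lambda>_. borel)) (unit_cube kj))"
    and \<psi>b: "\<And>x. x \<in> unit_cube kj \<Longrightarrow> \<bar>\<psi> x\<bar> \<le> cpsi"
    and cpos: "cphi \<ge> 0" "cpsi \<ge> 0"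
  shows "\<bar>\<integral>\<omega>. (\<Sum>a\<in>incr_tuples n ki. \<Sum>b\<in>PiE {..<m} (\<lambda>_. nbhd n ki kj a).
            \<Prod>l<m. X_term M n kj E \<phi> \<psi> \<kappa> U Y (b l) \<omega>) \<partial>M\<bar>
     \<le> real (card {(a, b). a \<in> incr_tuples n ki \<and> b \<in> PiE {..<m} (\<lambda>_. nbhd n ki kj a) \<and> good m a b})
        * ((real (n choose kj)) powr (-1/2) * (cphi * (2 * cpsi) * (\<bar>B\<bar> + 1) ^ card E)) ^ m"
proof -
  interpret prob_space M by (rule M)
  define G where "G = gen_sigma M U {1..n}"
  define I where "I = {(v, w). 1 \<le> v \<and> v < w \<and> w \<le> n}"
  define Y' where "Y' = (\<lambda>(v, w). Y v w)"
  define \<kappa>' where "\<kappa>' = (\<lambda>(v::nat, w::nat) \<omega>. \<kappa> (U v \<omega>) (U w \<omega>))"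
  define bn where "bn = (real (n choose kj)) powr (-1/2)"
  define CX where "CX = cphi * (2 * cpsi) * (\<bar>B\<bar> + 1) ^ card E"
  define X where "X = X_term M n kj E \<phi> \<psi> \<kappa> U Y"
  have bn0: "bn \<ge> 0" unfolding bn_def by simp
  have CX0: "CX \<ge> 0" unfolding CX_def using cpos by simp
  have subG: "subalgebra M G" unfolding G_def by (rule gen_sigma_facts(1)[OF Um])
  have UG: "\<And>v. v \<in> {1..n} \<Longrightarrow> U v \<in> borel_measurable G" unfolding G_def by (rule gen_sigma_facts(2)[OF Um])
  have spG: "space G = space M" using subG unfolding subalgebra_def by simp
  have GM: "\<And>f. f \<in> borel_measurable G \<Longrightarrow> f \<in> borel_measurable M"
    using measurable_from_subalg[OF subG] by blast
  have ci: "ci_setup M G Y' I B"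
    unfolding ci_setup_def ci_setup_axioms_def
  proof (intro conjI allI impI)
    show "prob_space M" by (rule M)
    show "subalgebra M G" by (rule subG)
    show "cond_indep_vars M G Y' I" using Yci unfolding G_def Y'_def I_def .
  next
    fix i assume "i \<in> I" then show "Y' i \<in> borel_measurable M" unfolding I_def Y'_def using Ym by auto
  next
    fix i \<omega> assume "i \<in> I" "\<omega> \<in> space M" then show "\<bar>Y' i \<omega>\<bar> \<le> B" unfolding I_def Y'_def using Yb by auto
  qed
  interpret ci: ci_setup M G Y' I B by (rule ci)
  have I_iff: "(v, w) \<in> I \<longleftrightarrow> 1 \<le> v \<and> v < w \<and> w \<le> n" for v w unfolding I_def by simp
  have \<kappa>01: "\<kappa> x y \<in> {0..1}" if "x \<in> {0..1}" "y \<in> {0..1}" for x y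
    using \<kappa> that unfolding graphon_def by blast
  have \<kappa>'G: "\<kappa>' j \<in> borel_measurable G" if "j \<in> I" for j
  proof -
    obtain v w where j: "j = (v, w)" by (cases j)
    have "v \<in> {1..n}" "w \<in> {1..n}" using that j I_iff by auto
    then show ?thesis unfolding j \<kappa>'_def using UG UR spG
      by (simp, intro kappa_meas[OF \<kappa>]) auto
  qed
  have \<kappa>'b: "\<bar>\<kappa>' j \<omega>\<bar> \<le> 1" if "j \<in> I" "\<omega> \<in> space M" for j \<omega>
  proof -
    obtain v w where j: "j = (v, w)" by (cases j)
    have "v \<in> {1..n}" "w \<in> {1..n}" using that j I_iff by auto
    then have "\<kappa> (U v \<omega>) (U w \<omega>) \<in> {0..1}" using UR that(2) \<kappa>01 by blast
    then show ?thesis unfolding j \<kappa>'_def by simp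
  qed
  have tup: "length b = kj" "set b \<subseteq> {1..n}" if "b \<in> incr_tuples n kj" for b
    using incr_tuplesD[OF that] by auto
  have PsiG: "(\<lambda>\<omega>. \<psi> (Uvec U b \<omega>)) \<in> borel_measurable G" if b: "b \<in> incr_tuples n kj" for b
    by (rule Uvec_meas[OF tup(2)[OF b] UG]) (use UR spG tup(1)[OF b] \<psi>m in auto)
  have Psib: "\<bar>\<psi> (Uvec U b \<omega>)\<bar> \<le> cpsi" if b: "b \<in> incr_tuples n kj" and \<omega>: "\<omega> \<in> space M" for b \<omega>
  proof -
    have "Uvec U b \<omega> \<in> unit_cube (length b)" by (rule Uvec_cube[OF tup(2)[OF b]]) (use UR \<omega> in auto)
    then show ?thesis using \<psi>b tup(1)[OF b] by simp
  qed
  have PhiG: "Phi_term M kj \<psi> U b \<in> borel_measurable G" if b: "b \<in> incr_tuples n kj" for b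
  proof (cases "kj = 1")
    case True
    then show ?thesis unfolding Phi_term_def using PsiG[OF b] by simp
  next
    case False
    then show ?thesis unfolding Phi_term_def using PsiG[OF b] by simp
  qed
  have Phib: "\<bar>Phi_term M kj \<psi> U b \<omega>\<bar> \<le> 2 * cpsi" if b: "b \<in> incr_tuples n kj" and \<omega>: "\<omega> \<in> space M" for b \<omega>
  proof -
    have "\<bar>\<integral>\<omega>'. \<psi> (Uvec U b \<omega>') \<partial>M\<bar> \<le> cpsi"
      by (rule abs_int_le[OF GM[OF PsiG[OF b]] Psib[OF b]])
    then show ?thesis unfolding Phi_term_def using Psib[OF b \<omega>] cpos by auto
  qed
  have edge: "1 \<le> b ! v \<and> b ! v < b ! w \<and> b ! w \<le> n" if b: "b \<in> incr_tuples n kj" and ed: "(v, w) \<in> E" for b v w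
    using eps_in_I[of "\<lambda>_. b" 0 n kj E "(v, w)"] b E ed unfolding epsb_def by simp
  have factor_m: "(\<lambda>\<omega>. Y (b ! v) (b ! w) \<omega> - \<kappa> (U (b ! v) \<omega>) (U (b ! w) \<omega>)) \<in> borel_measurable M"
    if b: "b \<in> incr_tuples n kj" and ed: "(v, w) \<in> E" for b v w
  proof -
    have e: "1 \<le> b ! v" "b ! v < b ! w" "b ! w \<le> n" using edge[OF b ed] by auto
    have "(\<lambda>\<omega>. \<kappa> (U (b ! v) \<omega>) (U (b ! w) \<omega>)) \<in> borel_measurable M"
      by (rule kappa_meas[OF \<kappa>]) (use Um UR e in auto)
    then show ?thesis using Ym[OF e] by simp
  qed
  have factor_b: "\<bar>Y (b ! v) (b ! w) \<omega> - \<kappa> (U (b ! v) \<omega>) (U (b ! w) \<omega>)\<bar> \<le> \<bar>B\<bar> + 1"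
    if b: "b \<in> incr_tuples n kj" and ed: "(v, w) \<in> E" and \<omega>: "\<omega> \<in> space M" for b v w \<omega>
  proof -
    have e: "1 \<le> b ! v" "b ! v < b ! w" "b ! w \<le> n" using edge[OF b ed] by auto
    have "\<kappa> (U (b ! v) \<omega>) (U (b ! w) \<omega>) \<in> {0..1}" using \<kappa>01 UR e \<omega> by auto
    moreover have "\<bar>Y (b ! v) (b ! w) \<omega>\<bar> \<le> B" by (rule Yb[OF e \<omega>])
    ultimately show ?thesis by auto
  qed
  have Tm: "T_term kj E Y \<kappa> U b \<in> borel_measurable M" if b: "b \<in> incr_tuples n kj" for b
  proof (cases "kj = 1")
    case True then show ?thesis unfolding T_term_def by simp
  next
    case False
    have "(\<lambda>\<omega>. \<Prod>(v, w)\<in>E. Y (b ! v) (b ! w) \<omega> - \<kappa> (U (b ! v) \<omega>) (U (b ! w) \<omega>)) \<in> borel_measurable M"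
    proof (rule borel_measurable_prod)
      fix ed assume ed: "ed \<in> E"
      obtain v w where vw: "ed = (v, w)" by (cases ed)
      show "(\<lambda>\<omega>. case ed of (v, w) \<Rightarrow> Y (b ! v) (b ! w) \<omega> - \<kappa> (U (b ! v) \<omega>) (U (b ! w) \<omega>)) \<in> borel_measurable M"
        using factor_m[OF b ed[unfolded vw]] unfolding vw by simp
    qed
    then show ?thesis using False unfolding T_term_def by simp
  qed
  have Tb: "\<bar>T_term kj E Y \<kappa> U b \<omega>\<bar> \<le> (\<bar>B\<bar> + 1) ^ card E" if b: "b \<in> incr_tuples n kj" and \<omega>: "\<omega> \<in> space M" for b \<omega>
  proof (cases "kj = 1")
    case True then show ?thesis unfolding T_term_def by simp
  next
    case False
    have "\<bar>\<Prod>(v, w)\<in>E. Y (b ! v) (b ! w) \<omega> - \<kappa> (U (b ! v) \<omega>) (U (b ! w) \<omega>)\<bar> \<le> (\<bar>B\<bar> + 1) ^ card E"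
    proof (rule prod_abs_le)
      fix ed assume ed: "ed \<in> E"
      obtain v w where vw: "ed = (v, w)" by (cases ed)
      show "\<bar>case ed of (v, w) \<Rightarrow> Y (b ! v) (b ! w) \<omega> - \<kappa> (U (b ! v) \<omega>) (U (b ! w) \<omega>)\<bar> \<le> \<bar>B\<bar> + 1"
        using factor_b[OF b ed[unfolded vw] \<omega>] unfolding vw by simp
    qed
    then show ?thesis using False unfolding T_term_def by simp
  qed
  have Xm: "X b \<in> borel_measurable M" if b: "b \<in> incr_tuples n kj" for b
    unfolding X_def X_term_def using GM[OF PhiG[OF b]] Tm[OF b] by simp
  have Xb: "\<bar>X b \<omega>\<bar> \<le> bn * CX" if b: "b \<in> incr_tuples n kj" and \<omega>: "\<omega> \<in> space M" for b \<omega>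
  proof -
    have p: "\<bar>\<phi> (scaled n b)\<bar> \<le> cphi" using \<phi>b scaled_in_D[OF b] tup(1)[OF b] by simp
    have "\<bar>X b \<omega>\<bar> = bn * \<bar>\<phi> (scaled n b)\<bar> * \<bar>Phi_term M kj \<psi> U b \<omega>\<bar> * \<bar>T_term kj E Y \<kappa> U b \<omega>\<bar>"
      unfolding X_def X_term_def bn_def by (simp add: abs_mult)
    also have "\<dots> \<le> bn * cphi * (2 * cpsi) * (\<bar>B\<bar> + 1) ^ card E"
      using bn0 p Phib[OF b \<omega>] Tb[OF b \<omega>] cpos
      by (intro mult_mono) (auto intro: mult_nonneg_nonneg)
    finally show ?thesis unfolding CX_def by (simp add: ac_simps)
  qed
  have famb: "b l \<in> incr_tuples n kj" if b: "b \<in> PiE {..<m} (\<lambda>_. nbhd n ki kj a)" and l: "l < m" for a b l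
    using b l unfolding nbhd_def by auto
  have PXm: "(\<lambda>\<omega>. \<Prod>l<m. X (b l) \<omega>) \<in> borel_measurable M" if b: "b \<in> PiE {..<m} (\<lambda>_. nbhd n ki kj a)" for a b
    by (rule borel_measurable_prod) (use Xm famb[OF b] in simp)
  have PXb: "\<bar>\<Prod>l<m. X (b l) \<omega>\<bar> \<le> (bn * CX) ^ m" if b: "b \<in> PiE {..<m} (\<lambda>_. nbhd n ki kj a)" and \<omega>: "\<omega> \<in> space M" for a b \<omega>
    using prod_abs_le[of "{..<m}" "\<lambda>l. X (b l) \<omega>" "bn * CX"] Xb[OF famb[OF b] \<omega>] by simp
  have PXi: "integrable M (\<lambda>\<omega>. \<Prod>l<m. X (b l) \<omega>)" if b: "b \<in> PiE {..<m} (\<lambda>_. nbhd n ki kj a)" for a b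
    by (rule ci.int_bdd[OF PXm[OF b] PXb[OF b]])
  have PXabs: "\<bar>\<integral>\<omega>. (\<Prod>l<m. X (b l) \<omega>) \<partial>M\<bar> \<le> (bn * CX) ^ m" if b: "b \<in> PiE {..<m} (\<lambda>_. nbhd n ki kj a)" for a b
    by (rule abs_int_le[OF PXm[OF b] PXb[OF b]])
  have bad0: "(\<integral>\<omega>. (\<Prod>l<m. X (b l) \<omega>) \<partial>M) = 0"
    if a: "a \<in> incr_tuples n ki" and b: "b \<in> PiE {..<m} (\<lambda>_. nbhd n ki kj a)" and bad: "\<not> good m a b" for a b
  proof -
    have kj1: "kj \<noteq> 1" by (rule bad_edge(1)[OF a b bad E ki])
    obtain q0 where q0: "q0 \<in> {..<m} \<times> E" "\<And>q. q \<in> {..<m} \<times> E \<Longrightarrow> q \<noteq> q0 \<Longrightarrow> epsb b q \<noteq> epsb b q0"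
      using bad_edge(2)[OF a b bad E ki] by blast
    define Q where "Q = {..<m} \<times> E"
    define cb where "cb = (\<lambda>\<omega>. \<Prod>l<m. bn * \<phi> (scaled n (b l)) * Phi_term M kj \<psi> U (b l) \<omega>)"
    have Qf: "finite Q" unfolding Q_def using graph_finite[OF E] by simp
    have epsI: "epsb b q \<in> I" if q: "q \<in> Q" for q
    proof -
      obtain l ed where q': "q = (l, ed)" by (cases q)
      have lm: "l < m" and edE: "ed \<in> E" using q q' Q_def by auto
      have "1 \<le> fst (epsb b (l, ed)) \<and> fst (epsb b (l, ed)) < snd (epsb b (l, ed)) \<and> snd (epsb b (l, ed)) \<le> n"
        by (rule eps_in_I[of b l n kj E ed, OF famb[OF b lm] E edE])
      then show ?thesis using q' unfolding I_def
        by (cases "epsb b (l, ed)") auto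
    qed
    have rep: "(\<Prod>l<m. X (b l) \<omega>) = cb \<omega> * (\<Prod>q\<in>Q. Y' (epsb b q) \<omega> - \<kappa>' (epsb b q) \<omega>)" for \<omega>
    proof -
      have "(\<Prod>l<m. X (b l) \<omega>) = (\<Prod>l<m. (bn * \<phi> (scaled n (b l)) * Phi_term M kj \<psi> U (b l) \<omega>) *
              (\<Prod>ed\<in>E. Y' (epsb b (l, ed)) \<omega> - \<kappa>' (epsb b (l, ed)) \<omega>))"
      proof (rule prod.cong[OF refl])
        fix l assume "l \<in> {..<m}"
        have "T_term kj E Y \<kappa> U (b l) \<omega> = (\<Prod>ed\<in>E. Y' (epsb b (l, ed)) \<omega> - \<kappa>' (epsb b (l, ed)) \<omega>)"
          unfolding T_term_def using kj1
          by (simp, intro prod.cong refl) (auto simp: Y'_def \<kappa>'_def epsb_def split: prod.splits)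
        then show "X (b l) \<omega> = (bn * \<phi> (scaled n (b l)) * Phi_term M kj \<psi> U (b l) \<omega>) *
              (\<Prod>ed\<in>E. Y' (epsb b (l, ed)) \<omega> - \<kappa>' (epsb b (l, ed)) \<omega>)"
          unfolding X_def X_term_def bn_def by simp
      qed
      also have "\<dots> = cb \<omega> * (\<Prod>l<m. \<Prod>ed\<in>E. Y' (epsb b (l, ed)) \<omega> - \<kappa>' (epsb b (l, ed)) \<omega>)"
        unfolding cb_def by (rule prod.distrib)
      also have "(\<Prod>l<m. \<Prod>ed\<in>E. Y' (epsb b (l, ed)) \<omega> - \<kappa>' (epsb b (l, ed)) \<omega>)
          = (\<Prod>q\<in>Q. Y' (epsb b q) \<omega> - \<kappa>' (epsb b q) \<omega>)"
        unfolding Q_def by (subst prod.cartesian_product) (simp add: case_prod_beta')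
      finally show ?thesis .
    qed
    have cbG: "cb \<in> borel_measurable G" unfolding cb_def
      by (rule borel_measurable_prod) (use PhiG famb[OF b] in simp)
    have cbb: "\<bar>cb \<omega>\<bar> \<le> (bn * cphi * (2 * cpsi)) ^ m" if \<omega>: "\<omega> \<in> space M" for \<omega>
    proof -
    have "\<bar>cb \<omega>\<bar> \<le> (bn * cphi * (2 * cpsi)) ^ card {..<m}"
      unfolding cb_def
    proof (rule prod_abs_le)
      fix l assume l: "l \<in> {..<m}"
      have bl: "b l \<in> incr_tuples n kj" using famb[OF b] l by simp
      have p: "\<bar>\<phi> (scaled n (b l))\<bar> \<le> cphi" using \<phi>b scaled_in_D[OF bl] tup(1)[OF bl] by simp
      show "\<bar>bn * \<phi> (scaled n (b l)) * Phi_term M kj \<psi> U (b l) \<omega>\<bar> \<le> bn * cphi * (2 * cpsi)"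
        unfolding abs_mult using bn0 p Phib[OF bl \<omega>] cpos
        by (intro mult_mono) (auto intro: mult_nonneg_nonneg)
    qed
    then show ?thesis by simp
    qed
    have ce: "AE \<omega> in M. real_cond_exp M G (Y' (epsb b q0)) \<omega> = \<kappa>' (epsb b q0) \<omega>"
    proof -
      obtain v w where vw: "epsb b q0 = (v, w)" by (cases "epsb b q0")
      have "(v, w) \<in> I" using epsI q0(1) vw unfolding Q_def by metis
      then have "1 \<le> v" "v < w" "w \<le> n" unfolding I_def by auto
      then show ?thesis unfolding vw Y'_def \<kappa>'_def G_def using Yce by simp
    qed
    have "(\<integral>\<omega>. (\<Prod>l<m. X (b l) \<omega>) \<partial>M) = (\<integral>\<omega>. cb \<omega> * (\<Prod>q\<in>Q. Y' (epsb b q) \<omega> - \<kappa>' (epsb b q) \<omega>) \<partial>M)"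
      by (simp only: rep)
    also have "\<dots> = 0"
      by (rule ci.vanish[where \<epsilon>="epsb b" and Q=Q and \<kappa>'=\<kappa>' and c=cb, OF Qf q0(1)[folded Q_def] epsI q0(2)[folded Q_def] \<kappa>'G \<kappa>'b ce cbG cbb])
    finally show ?thesis .
  qed
  define SIG where "SIG = (SIGMA a:incr_tuples n ki. PiE {..<m} (\<lambda>_. nbhd n ki kj a))"
  define Good where "Good = {(a, b). a \<in> incr_tuples n ki \<and> b \<in> PiE {..<m} (\<lambda>_. nbhd n ki kj a) \<and> good m a b}"
  have fin_a: "finite (incr_tuples n ki)" by (rule card_incr_tuples(2))
  have fin_b: "finite (PiE {..<m} (\<lambda>_. nbhd n ki kj a))" for a by (intro finite_PiE finite_nbhd) simp
  have SIGf: "finite SIG" unfolding SIG_def using fin_a fin_b by simp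
  have GoodSIG: "Good \<subseteq> SIG" unfolding Good_def SIG_def by auto
  have "(\<integral>\<omega>. (\<Sum>a\<in>incr_tuples n ki. \<Sum>b\<in>PiE {..<m} (\<lambda>_. nbhd n ki kj a). \<Prod>l<m. X (b l) \<omega>) \<partial>M)
      = (\<Sum>a\<in>incr_tuples n ki. (\<integral>\<omega>. (\<Sum>b\<in>PiE {..<m} (\<lambda>_. nbhd n ki kj a). \<Prod>l<m. X (b l) \<omega>) \<partial>M))"
    by (rule Bochner_Integration.integral_sum[where f="\<lambda>a \<omega>. \<Sum>b\<in>PiE {..<m} (\<lambda>_. nbhd n ki kj a). \<Prod>l<m. X (b l) \<omega>"])
      (rule Bochner_Integration.integrable_sum, rule PXi, assumption)
  also have "\<dots> = (\<Sum>a\<in>incr_tuples n ki. \<Sum>b\<in>PiE {..<m} (\<lambda>_. nbhd n ki kj a). (\<integral>\<omega>. (\<Prod>l<m. X (b l) \<omega>) \<partial>M))"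
  proof (rule sum.cong[OF refl])
    fix a assume "a \<in> incr_tuples n ki"
    show "(\<integral>\<omega>. (\<Sum>b\<in>PiE {..<m} (\<lambda>_. nbhd n ki kj a). \<Prod>l<m. X (b l) \<omega>) \<partial>M)
        = (\<Sum>b\<in>PiE {..<m} (\<lambda>_. nbhd n ki kj a). (\<integral>\<omega>. (\<Prod>l<m. X (b l) \<omega>) \<partial>M))"
      by (rule Bochner_Integration.integral_sum[where f="\<lambda>b \<omega>. \<Prod>l<m. X (b l) \<omega>"]) (use PXi in blast)
  qed
  also have "\<dots> = (\<Sum>p\<in>SIG. (\<integral>\<omega>. (\<Prod>l<m. X (snd p l) \<omega>) \<partial>M))"
    unfolding SIG_def by (subst sum.Sigma[OF fin_a]) (use fin_b in \<open>auto simp: case_prod_beta'\<close>)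
  finally have eq1: "(\<integral>\<omega>. (\<Sum>a\<in>incr_tuples n ki. \<Sum>b\<in>PiE {..<m} (\<lambda>_. nbhd n ki kj a). \<Prod>l<m. X (b l) \<omega>) \<partial>M)
      = (\<Sum>p\<in>SIG. (\<integral>\<omega>. (\<Prod>l<m. X (snd p l) \<omega>) \<partial>M))" .
  have "(\<Sum>p\<in>SIG. (\<integral>\<omega>. (\<Prod>l<m. X (snd p l) \<omega>) \<partial>M)) = (\<Sum>p\<in>Good. (\<integral>\<omega>. (\<Prod>l<m. X (snd p l) \<omega>) \<partial>M))"
  proof (rule sum.mono_neutral_right[OF SIGf GoodSIG, symmetric, THEN sym])
    show "\<forall>p\<in>SIG - Good. (\<integral>\<omega>. (\<Prod>l<m. X (snd p l) \<omega>) \<partial>M) = 0"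
    proof
      fix p assume p: "p \<in> SIG - Good"
      obtain a b where ab: "p = (a, b)" by (cases p)
      have a: "a \<in> incr_tuples n ki" and b: "b \<in> PiE {..<m} (\<lambda>_. nbhd n ki kj a)" and bad: "\<not> good m a b"
        using p ab unfolding SIG_def Good_def by auto
      show "(\<integral>\<omega>. (\<Prod>l<m. X (snd p l) \<omega>) \<partial>M) = 0" using bad0[OF a b bad] ab by simp
    qed
  qed
  also have "\<bar>\<dots>\<bar> \<le> (\<Sum>p\<in>Good. \<bar>\<integral>\<omega>. (\<Prod>l<m. X (snd p l) \<omega>) \<partial>M\<bar>)" by (rule sum_abs)
  also have "\<dots> \<le> (\<Sum>p\<in>Good. (bn * CX) ^ m)"
  proof (rule sum_mono)
    fix p assume "p \<in> Good"
    then show "\<bar>\<integral>\<omega>. (\<Prod>l<m. X (snd p l) \<omega>) \<partial>M\<bar> \<le> (bn * CX) ^ m"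
      unfolding Good_def using PXabs by auto
  qed
  also have "\<dots> = real (card Good) * (bn * CX) ^ m" by simp
  finally show ?thesis unfolding eq1[unfolded X_def] Good_def bn_def CX_def X_def .
qed


lemma final_arith:
  fixes n ki kj m r s :: nat and CX Cnt Gd :: real
  assumes n: "n \<ge> 1" and kj: "kj \<ge> 1" "kj \<le> n" and CX: "CX \<ge> 0"
    and Gd: "Gd \<le> real n ^ (ki + r) * Cnt" "Gd \<ge> 0"
    and Cnt: "Cnt \<ge> 0"
    and r: "2 * r \<le> (kj - s) * m" and s: "s \<le> kj"
  shows "Gd * ((real (n choose kj)) powr (-1/2) * CX) ^ m
         \<le> Cnt * CX ^ m * real kj powr (real kj * real m / 2) * real n powr (real ki - real s * real m / 2)"
proof -
  define N where "N = real n"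
  define K where "K = real kj"
  have N1: "N \<ge> 1" "N > 0" using n unfolding N_def by auto
  have K1: "K \<ge> 1" "K > 0" using kj unfolding K_def by auto
  define bn where "bn = (real (n choose kj)) powr (-1/2)"
  have bn0: "bn \<ge> 0" unfolding bn_def by simp
  have pos: "(N / K) ^ kj > 0" using N1 K1 by simp
  have h1: "(N / K) ^ kj \<le> real (n choose kj)"
    unfolding N_def K_def by (rule binomial_ge_n_over_k_pow_k[OF kj(2)])
  have h2: "bn \<le> ((N / K) ^ kj) powr (-1/2)"
    unfolding bn_def by (rule powr_mono2'[OF _ pos h1]) simp
  have h3: "((N / K) ^ kj) powr (-1/2) = (N / K) powr (- K / 2)"
  proof -
    have "(N / K) powr K = (N / K) ^ kj" unfolding K_def by (rule powr_realpow) (use N1 K1 K_def in simp)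
    then have "(N / K) ^ kj = (N / K) powr K" by simp
    then show ?thesis by (simp add: powr_powr)
  qed
  have h4: "(N / K) powr (- K / 2) = K powr (K / 2) * N powr (- K / 2)"
  proof -
    have "(N / K) powr (- K / 2) = N powr (- K / 2) / K powr (- K / 2)" by (rule powr_divide)
    also have "K powr (- K / 2) = 1 / K powr (K / 2)" using powr_minus_divide[of K "K / 2"] by simp
    also have "N powr (- K / 2) / (1 / K powr (K / 2)) = K powr (K / 2) * N powr (- K / 2)" by simp
    finally show ?thesis .
  qed
  have bnA: "bn \<le> K powr (K / 2) * N powr (- K / 2)" using h2 h3 h4 by simp
  have h5: "(bn * CX) ^ m \<le> (K powr (K / 2) * N powr (- K / 2) * CX) ^ m"
    by (rule power_mono) (use bnA bn0 CX in \<open>auto intro: mult_right_mono\<close>)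
  have h6: "(K powr (K / 2) * N powr (- K / 2) * CX) ^ m = K powr (K * m / 2) * N powr (- K * m / 2) * CX ^ m"
    using N1 K1 by (simp add: power_mult_distrib powr_power algebra_simps)
  have h7: "real n ^ (ki + r) = N powr (real ki + real r)"
  proof -
    have "N powr (real (ki + r)) = N ^ (ki + r)" by (rule powr_realpow) (use N1 in simp)
    then show ?thesis unfolding N_def by simp
  qed
  have e: "N powr (real ki + real r - K * m / 2) \<le> N powr (real ki - real s * real m / 2)"
  proof (rule powr_mono[OF _ N1(1)])
    have "2 * real r \<le> (real kj - real s) * real m" using r s by (simp flip: of_nat_diff of_nat_mult)
    then show "real ki + real r - K * m / 2 \<le> real ki - real s * real m / 2" unfolding K_def
      by (simp add: algebra_simps)
  qed
  have "Gd * (bn * CX) ^ m \<le> (N powr (real ki + real r) * Cnt) * (K powr (K * m / 2) * N powr (- K * m / 2) * CX ^ m)"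
    using Gd h5 h6 h7 bn0 CX by (intro mult_mono) auto
  also have "\<dots> = Cnt * CX ^ m * K powr (K * m / 2) * (N powr (real ki + real r) * N powr (- K * m / 2))"
    by (simp add: ac_simps)
  also have "N powr (real ki + real r) * N powr (- K * m / 2) = N powr (real ki + real r - K * m / 2)"
    by (simp add: powr_add[symmetric])
  also have "Cnt * CX ^ m * K powr (K * m / 2) * N powr (real ki + real r - K * m / 2)
      \<le> Cnt * CX ^ m * K powr (K * m / 2) * N powr (real ki - real s * real m / 2)"
    by (rule mult_left_mono[OF e]) (use Cnt CX in simp)
  finally show ?thesis unfolding bn_def N_def K_def .
qed


theorem lemma6:
  fixes d :: nat and k :: "nat \<Rightarrow> nat" and F :: "nat \<Rightarrow> (nat \<times> nat) set"
    and \<phi> \<psi> :: "nat \<Rightarrow> (nat \<Rightarrow> real) \<Rightarrow> real"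
    and \<kappa> :: "real \<Rightarrow> real \<Rightarrow> real" and B :: real
    and M :: "nat \<Rightarrow> 'a measure" and U :: "nat \<Rightarrow> nat \<Rightarrow> 'a \<Rightarrow> real"
    and Y :: "nat \<Rightarrow> nat \<Rightarrow> nat \<Rightarrow> 'a \<Rightarrow> real"
    and i j m :: nat
  assumes d: "d \<ge> 1"
    and k: "\<And>i. i \<in> {1..d} \<Longrightarrow> k i \<ge> 1"
    and F: "\<And>i. i \<in> {1..d} \<Longrightarrow> connected_graph (k i) (F i)"
    and \<phi>_meas: "\<And>i. i \<in> {1..d} \<Longrightarrow>
        \<phi> i \<in> borel_measurable (restrict_space (PiM {..<k i} (\<lambda>_. borel)) (simplex_D (k i)))"
    and \<phi>_bdd: "\<And>i. i \<in> {1..d} \<Longrightarrow> \<exists>c. \<forall>x\<in>simplex_D (k i). \<bar>\<phi> i x\<bar> \<le> c"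
    and \<psi>_meas: "\<And>i. i \<in> {1..d} \<Longrightarrow>
        \<psi> i \<in> borel_measurable (restrict_space (PiM {..<k i} (\<lambda>_. borel)) (unit_cube (k i)))"
    and \<psi>_bdd: "\<And>i. i \<in> {1..d} \<Longrightarrow> \<exists>c. \<forall>x\<in>unit_cube (k i). \<bar>\<psi> i x\<bar> \<le> c"
    and \<kappa>: "graphon \<kappa>"
    and M: "\<And>n. n \<ge> 1 \<Longrightarrow> prob_space (M n)"
    and U_indep: "\<And>n. n \<ge> 1 \<Longrightarrow> prob_space.indep_vars (M n) (\<lambda>_. borel) (U n) {1..n}"
    and U_range: "\<And>n v \<omega>. n \<ge> 1 \<Longrightarrow> v \<in> {1..n} \<Longrightarrow> \<omega> \<in> space (M n) \<Longrightarrow> U n v \<omega> \<in> {0..1}"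
    and Y_meas: "\<And>n v w. n \<ge> 1 \<Longrightarrow> 1 \<le> v \<Longrightarrow> v < w \<Longrightarrow> w \<le> n \<Longrightarrow>
        Y n v w \<in> borel_measurable (M n)"
    and Y_bdd: "\<And>n v w \<omega>. n \<ge> 1 \<Longrightarrow> 1 \<le> v \<Longrightarrow> v < w \<Longrightarrow> w \<le> n \<Longrightarrow> \<omega> \<in> space (M n) \<Longrightarrow>
        \<bar>Y n v w \<omega>\<bar> \<le> B"
    and Y_cind: "\<And>n. n \<ge> 1 \<Longrightarrow> cond_indep_vars (M n) (gen_sigma (M n) (U n) {1..n})
        (\<lambda>(v, w). Y n v w) {(v, w). 1 \<le> v \<and> v < w \<and> w \<le> n}"
    and Y_cexp: "\<And>n v w. n \<ge> 1 \<Longrightarrow> 1 \<le> v \<Longrightarrow> v < w \<Longrightarrow> w \<le> n \<Longrightarrow>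
        AE \<omega> in M n. real_cond_exp (M n) (gen_sigma (M n) (U n) {1..n}) (Y n v w) \<omega>
                       = \<kappa> (U n v \<omega>) (U n w \<omega>)"
    and ij: "i \<in> {1..d}" "j \<in> {1..d}"
    and m: "m \<ge> 2"
  shows "\<exists>C > 0. \<forall>n \<ge> 1.
     \<bar>integral\<^sup>L (M n) (\<lambda>\<omega>. \<Sum>a\<in>incr_tuples n (k i).
          \<Sum>b\<in>PiE {..<m} (\<lambda>_. nbhd n (k i) (k j) a).
            \<Prod>l<m. X_term (M n) n (k j) (F j) (\<phi> j) (\<psi> j) \<kappa> (U n) (Y n) (b l) \<omega>)\<bar>
     \<le> (if k i = 1 then C * real n powr (1 - real m / 2) else C * real n powr (real (k i) - real m))"
proof -
  have ki1: "k i \<ge> 1" using k ij(1) by blast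
  have kj1: "k j \<ge> 1" using k ij(2) by blast
  have Ej: "connected_graph (k j) (F j)" using F ij(2) by blast
  obtain cphi0 where cphi0: "\<forall>x\<in>simplex_D (k j). \<bar>\<phi> j x\<bar> \<le> cphi0" using \<phi>_bdd[OF ij(2)] by blast
  obtain cpsi0 where cpsi0: "\<forall>x\<in>unit_cube (k j). \<bar>\<psi> j x\<bar> \<le> cpsi0" using \<psi>_bdd[OF ij(2)] by blast
  define cphi where "cphi = \<bar>cphi0\<bar>"
  define cpsi where "cpsi = \<bar>cpsi0\<bar>"
  have \<phi>b: "\<And>x. x \<in> simplex_D (k j) \<Longrightarrow> \<bar>\<phi> j x\<bar> \<le> cphi"
  proof -
    fix x assume "x \<in> simplex_D (k j)"
    then have "\<bar>\<phi> j x\<bar> \<le> cphi0" using cphi0 by blast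
    then show "\<bar>\<phi> j x\<bar> \<le> cphi" unfolding cphi_def by linarith
  qed
  have \<psi>b: "\<And>x. x \<in> unit_cube (k j) \<Longrightarrow> \<bar>\<psi> j x\<bar> \<le> cpsi"
  proof -
    fix x assume "x \<in> unit_cube (k j)"
    then have "\<bar>\<psi> j x\<bar> \<le> cpsi0" using cpsi0 by blast
    then show "\<bar>\<psi> j x\<bar> \<le> cpsi" unfolding cpsi_def by linarith
  qed
  have cpos: "cphi \<ge> 0" "cpsi \<ge> 0" unfolding cphi_def cpsi_def by simp_all
  define CX where "CX = cphi * (2 * cpsi) * (\<bar>B\<bar> + 1) ^ card (F j)"
  have CX0: "CX \<ge> 0" unfolding CX_def using cpos by simp
  define s where "s = min 2 (k i)"
  define r where "r = (k j - s) * m div 2"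
  define Cnt where "Cnt = real ((k i + r) ^ (k j * m))"
  have Cnt0: "Cnt \<ge> 0" unfolding Cnt_def by simp
  define C0 where "C0 = Cnt * CX ^ m * real (k j) powr (real (k j) * real m / 2)"
  have C00: "C0 \<ge> 0" unfolding C0_def using Cnt0 CX0 by simp
  define C where "C = C0 + 1"
  show ?thesis
  proof (intro exI[of _ C] conjI allI impI)
    show "C > 0" unfolding C_def using C00 by simp
    fix n :: nat assume n: "n \<ge> 1"
    define e where "e = (if k i = 1 then 1 - real m / 2 else real (k i) - real m)"
    have e_eq: "real (k i) - real s * real m / 2 = e"
    proof (cases "k i = 1")
      case True then show ?thesis unfolding e_def s_def by simp
    next
      case False then have "k i \<ge> 2" using ki1 by simp
      then show ?thesis using False unfolding e_def s_def by simp
    qed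
    have R: "(if k i = 1 then C * real n powr (1 - real m / 2) else C * real n powr (real (k i) - real m))
        = C * real n powr e" unfolding e_def by simp
    have Cpe: "0 \<le> C * real n powr e" unfolding C_def using C00 by simp
    define Good where "Good = {(a, b). a \<in> incr_tuples n (k i) \<and> b \<in> PiE {..<m} (\<lambda>_. nbhd n (k i) (k j) a) \<and> good m a b}"
    define bn where "bn = (real (n choose (k j))) powr (-1/2)"
    have Um: "\<And>v. v \<in> {1..n} \<Longrightarrow> U n v \<in> borel_measurable (M n)"
    proof -
      fix v assume v: "v \<in> {1..n}"
      have iv: "prob_space.indep_vars (M n) (\<lambda>_. borel) (U n) {1..n}" by (rule U_indep[OF n])
      have "\<forall>v\<in>{1..n}. U n v \<in> borel_measurable (M n)"
        using iv unfolding prob_space.indep_vars_def2[OF M[OF n]] by (rule conjunct1)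
      then show "U n v \<in> borel_measurable (M n)" using v by blast
    qed
    have P: "\<bar>integral\<^sup>L (M n) (\<lambda>\<omega>. \<Sum>a\<in>incr_tuples n (k i).
          \<Sum>b\<in>PiE {..<m} (\<lambda>_. nbhd n (k i) (k j) a).
            \<Prod>l<m. X_term (M n) n (k j) (F j) (\<phi> j) (\<psi> j) \<kappa> (U n) (Y n) (b l) \<omega>)\<bar>
        \<le> real (card Good) * (bn * CX) ^ m"
      unfolding Good_def bn_def CX_def
      by (rule per_n[OF M[OF n] Um U_range[OF n] Y_meas[OF n] Y_bdd[OF n] Y_cind[OF n] Y_cexp[OF n]
            \<kappa> Ej ki1 \<phi>b \<psi>_meas[OF ij(2)] \<psi>b cpos])
    have main: "\<bar>integral\<^sup>L (M n) (\<lambda>\<omega>. \<Sum>a\<in>incr_tuples n (k i).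
          \<Sum>b\<in>PiE {..<m} (\<lambda>_. nbhd n (k i) (k j) a).
            \<Prod>l<m. X_term (M n) n (k j) (F j) (\<phi> j) (\<psi> j) \<kappa> (U n) (Y n) (b l) \<omega>)\<bar>
     \<le> C * real n powr e"
    proof (cases "k j < s")
      case True
      have empty: "nbhd n (k i) (k j) a = {}" for a
      proof -
        have "b \<notin> nbhd n (k i) (k j) a" for b
        proof
          assume b: "b \<in> nbhd n (k i) (k j) a"
          then have bi: "b \<in> incr_tuples n (k j)" and c: "card (set a \<inter> set b) \<ge> s"
            unfolding nbhd_def s_def by auto
          have "card (set a \<inter> set b) \<le> card (set b)" by (rule card_mono) auto
          then show False using c True incr_tuplesD(5)[OF bi] by simp
        qed
        then show ?thesis by blast
      qed
      have "PiE {..<m} (\<lambda>_. nbhd n (k i) (k j) a) = {}" for a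
        by (simp add: empty PiE_eq_empty_iff, rule exI[of _ 0]) (use m in simp)
      then show ?thesis using Cpe by simp
    next
      case False
      then have skj: "s \<le> k j" by simp
      show ?thesis
      proof (cases "n < k j")
        case True
        then have "bn = 0" unfolding bn_def by simp
        then have "real (card Good) * (bn * CX) ^ m = 0" using m by simp
        then show ?thesis using P Cpe by linarith
      next
        case False
        then have kjn: "k j \<le> n" by simp
        have cg: "card Good \<le> n ^ (k i + r) * (k i + r) ^ (k j * m)"
          unfolding Good_def r_def s_def by (rule count_good[OF n])
        have Gd: "real (card Good) \<le> real n ^ (k i + r) * Cnt"
          unfolding Cnt_def using cg by (simp flip: of_nat_power of_nat_mult)
        have r2: "2 * r \<le> (k j - s) * m" unfolding r_def by simp
        have "real (card Good) * (bn * CX) ^ m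
            \<le> Cnt * CX ^ m * real (k j) powr (real (k j) * real m / 2) * real n powr (real (k i) - real s * real m / 2)"
          unfolding bn_def by (rule final_arith[OF n kj1 kjn CX0 Gd _ Cnt0 r2 skj]) simp
        also have "\<dots> = C0 * real n powr e" unfolding C0_def e_eq ..
        also have "\<dots> \<le> C * real n powr e" unfolding C_def by (simp add: distrib_right)
        finally show ?thesis using P by linarith
      qed
    qed
    then show "\<bar>integral\<^sup>L (M n) (\<lambda>\<omega>. \<Sum>a\<in>incr_tuples n (k i).
          \<Sum>b\<in>PiE {..<m} (\<lambda>_. nbhd n (k i) (k j) a).
            \<Prod>l<m. X_term (M n) n (k j) (F j) (\<phi> j) (\<psi> j) \<kappa> (U n) (Y n) (b l) \<omega>)\<bar>
     \<le> (if k i = 1 then C * real n powr (1 - real m / 2) else C * real n powr (real (k i) - real m))"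
      unfolding R .
  qed
qed


end
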